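(* Let $\hat\omega$ be the $\mathbb Q$-algebra endomorphism of $\mathscr P^{S_\infty}(\mathbb Q)$ determined by $\hat\omega(e_n)=h_n$, $\hat\omega(\bar e_n)=\bar h_n$, $\hat\omega(\underline e_n)=\underline h_n$, $\hat\omega(\bar{\underline e}_n)=\bar{\underline h}_n$. Then $\hat\omega(p_n)=(-1)^{n-1}p_n$ ($n\ge1$), $\hat\omega(\bar p_n)=(-1)^n\bar p_n$, $\hat\omega(\underline p_n)=(-1)^n\underline p_n$, $\hat\omega(\bar{\underline p}_n)=(-1)^{n-1}\bar{\underline p}_n$ ($n\ge0$). Consequently, for every $\mathcal N=2$ superpartition $\Lambda$, $\hat\omega(p_\Lambda)=\omega_\Lambda p_\Lambda$ with $\omega_\Lambda=(-1)^{|\Lambda|-\ell(\Lambda^{bi})-\ell(\Lambda^0)}$, where $\ell(\Lambda^{bi})$ is the number of bilined parts and $\ell(\Lambda^0)$ the number of nonzero unmarked parts of $\Lambda$.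
   Context: Variables: commuting $x_1,x_2,\dots$; Grassmann $\phi_1,\phi_2,\dots,\theta_1,\theta_2,\dots$, all pairwise anticommuting and commuting with the $x$'s. $\mathscr P^{S_\infty}(\mathbb Q)$: superfunctions invariant under simultaneous interchange $(x_i,\phi_i,\theta_i)\leftrightarrow(x_j,\phi_j,\theta_j)$ (infinitely many variables), freely generated (supercommutatively) by $e_n,\bar e_n,\underline e_n,\bar{\underline e}_n$. Here $h_n,e_n$ are the classical complete/elementary symmetric functions ($h_0=e_0=1$), $\partial_i=\partial/\partial x_i$, and for $f\in\{h,e\}$, $n\ge0$: $\bar f_n=\sum_i\phi_i\partial_if_{n+1}$, $\underline f_n=\sum_i\theta_i\partial_if_{n+1}$, $\bar{\underline f}_n=\sum_{i,j}\phi_i\theta_j\partial_i\partial_jf_{n+2}$. Power sums: $p_n=\sum_ix_i^n$ ($n\ge1$), $p_0:=0$; $\bar p_n=\sum_i\phi_ix_i^n$, $\underline p_n=\sum_i\theta_ix_i^n$, $\bar{\underline p}_n=\sum_i\phi_i\theta_ix_i^n$ ($n\ge0$). An $\mathcal N=2$ superpartition $\Lambda$ is a finite multiset of parts, each a nonnegative integer $a$ with one of the markings bilined ($\bar{\underline a}$), overlined ($\bar a$), underlined ($\underline a$), unmarked ($a$); overlined parts are pairwise distinct, underlined parts pairwise distinct, unmarked zero parts are disregarded. Parts are listed $\Lambda=(\Lambda_1,\dots,\Lambda_\ell)$ in nonincreasing order of value $|\Lambda_i|$, ties ordered bilined, overlined, underlined, unmarked; $|\Lambda|=\sum_i|\Lambda_i|$.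 For such $\Lambda$, $p_\Lambda=\tilde p_{\Lambda_1}\cdots\tilde p_{\Lambda_\ell}$ (product in this order), where $\tilde p_{\Lambda_i}$ is $\bar{\underline p}_n$, $\bar p_n$, $\underline p_n$ or $p_n$ ($n=|\Lambda_i|$) according as $\Lambda_i$ is bilined, overlined, underlined or unmarked. *)

theory Defs
  imports Complex_Main
begin

text \<open>Grassmann generators are encoded by natural numbers: phi_i is 2*i, theta_i is 2*i+1.
  A monomial is a pair (alpha, S): alpha the exponent function of the x's (finite support),
  S a finite set of Grassmann generators, standing for x^alpha times the product of the
  generators in S taken in increasing order.\<close>

type_synonym sf = "(nat \<Rightarrow> nat) \<Rightarrow> nat set \<Rightarrow> rat"

definition phi_idx :: "nat \<Rightarrow> nat" where "phi_idx i = 2 * i"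
definition theta_idx :: "nat \<Rightarrow> nat" where "theta_idx i = 2 * i + 1"

definition xsupp :: "(nat \<Rightarrow> nat) \<Rightarrow> nat set" where
  "xsupp \<alpha> = {i. \<alpha> i \<noteq> 0}"

definition xdeg :: "(nat \<Rightarrow> nat) \<Rightarrow> nat" where
  "xdeg \<alpha> = (\<Sum>i\<in>xsupp \<alpha>. \<alpha> i)"

text \<open>Sign of (ordered product of T) * (ordered product of U) = gsign T U * (ordered product of T \<union> U)
  for disjoint T, U.\<close>
definition gsign :: "nat set \<Rightarrow> nat set \<Rightarrow> rat" where
  "gsign T U = (-1) ^ card {(t, u). t \<in> T \<and> u \<in> U \<and> u < t}"

definition sf_zero :: sf where "sf_zero = (\<lambda>\<alpha> S. 0)"
definition sf_one :: sf where
  "sf_one = (\<lambda>\<alpha> S. if \<alpha> = (\<lambda>_. 0) \<and> S = {} then 1 else 0)"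
definition sf_add :: "sf \<Rightarrow> sf \<Rightarrow> sf" where
  "sf_add f g = (\<lambda>\<alpha> S. f \<alpha> S + g \<alpha> S)"
definition sf_smul :: "rat \<Rightarrow> sf \<Rightarrow> sf" where
  "sf_smul c f = (\<lambda>\<alpha> S. c * f \<alpha> S)"

definition sf_mul :: "sf \<Rightarrow> sf \<Rightarrow> sf" where
  "sf_mul f g = (\<lambda>\<alpha> S. \<Sum>\<beta>\<in>{\<beta>. \<forall>i. \<beta> i \<le> \<alpha> i}. \<Sum>T\<in>Pow S.
      gsign T (S - T) * f \<beta> T * g (\<lambda>i. \<alpha> i - \<beta> i) (S - T))"

definition sfsum :: "('i \<Rightarrow> sf) \<Rightarrow> sf" where
  "sfsum F = (\<lambda>\<alpha> S. \<Sum>i\<in>{i. F i \<alpha> S \<noteq> 0}. F i \<alpha> S)"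

definition dx :: "nat \<Rightarrow> sf \<Rightarrow> sf" where
  "dx i f = (\<lambda>\<alpha> S. of_nat (\<alpha> i + 1) * f (\<alpha>(i := \<alpha> i + 1)) S)"

definition xpow :: "nat \<Rightarrow> nat \<Rightarrow> sf" where
  "xpow i n = (\<lambda>\<alpha> S. if \<alpha> = (\<lambda>j. if j = i then n else 0) \<and> S = {} then 1 else 0)"
definition phi :: "nat \<Rightarrow> sf" where
  "phi i = (\<lambda>\<alpha> S. if \<alpha> = (\<lambda>_. 0) \<and> S = {phi_idx i} then 1 else 0)"
definition theta :: "nat \<Rightarrow> sf" where
  "theta i = (\<lambda>\<alpha> S. if \<alpha> = (\<lambda>_. 0) \<and> S = {theta_idx i} then 1 else 0)"

definition esym :: "nat \<Rightarrow> sf" where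
  "esym n = (\<lambda>\<alpha> S. if S = {} \<and> finite (xsupp \<alpha>) \<and> (\<forall>i. \<alpha> i \<le> 1) \<and> card (xsupp \<alpha>) = n
                    then 1 else 0)"
definition hsym :: "nat \<Rightarrow> sf" where
  "hsym n = (\<lambda>\<alpha> S. if S = {} \<and> finite (xsupp \<alpha>) \<and> xdeg \<alpha> = n then 1 else 0)"

definition bar_of :: "(nat \<Rightarrow> sf) \<Rightarrow> nat \<Rightarrow> sf" where
  "bar_of f n = sfsum (\<lambda>i. sf_mul (phi i) (dx i (f (n + 1))))"
definition under_of :: "(nat \<Rightarrow> sf) \<Rightarrow> nat \<Rightarrow> sf" where
  "under_of f n = sfsum (\<lambda>i. sf_mul (theta i) (dx i (f (n + 1))))"
definition barunder_of :: "(nat \<Rightarrow> sf) \<Rightarrow> nat \<Rightarrow> sf" where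
  "barunder_of f n = sfsum (\<lambda>(i, j). sf_mul (sf_mul (phi i) (theta j)) (dx i (dx j (f (n + 2)))))"

definition psum :: "nat \<Rightarrow> sf" where
  "psum n = (if n = 0 then sf_zero else sfsum (\<lambda>i. xpow i n))"
definition psum_bar :: "nat \<Rightarrow> sf" where
  "psum_bar n = sfsum (\<lambda>i. sf_mul (phi i) (xpow i n))"
definition psum_under :: "nat \<Rightarrow> sf" where
  "psum_under n = sfsum (\<lambda>i. sf_mul (theta i) (xpow i n))"
definition psum_barunder :: "nat \<Rightarrow> sf" where
  "psum_barunder n = sfsum (\<lambda>i. sf_mul (sf_mul (phi i) (theta i)) (xpow i n))"

text \<open>Simultaneous interchange (x_i,phi_i,theta_i) <-> (x_j,phi_j,theta_j).\<close>
definition var_swap :: "nat \<Rightarrow> nat \<Rightarrow> nat \<Rightarrow> nat" where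
  "var_swap i j k = (if k = i then j else if k = j then i else k)"
definition gvar_swap :: "nat \<Rightarrow> nat \<Rightarrow> nat \<Rightarrow> nat" where
  "gvar_swap i j a = 2 * var_swap i j (a div 2) + a mod 2"
text \<open>Sign produced by reordering the image of an ordered Grassmann monomial.\<close>
definition perm_gsign :: "(nat \<Rightarrow> nat) \<Rightarrow> nat set \<Rightarrow> rat" where
  "perm_gsign \<sigma> S = (-1) ^ card {(a, b). a \<in> S \<and> b \<in> S \<and> a < b \<and> \<sigma> b < \<sigma> a}"

definition swap_invariant :: "sf \<Rightarrow> bool" where
  "swap_invariant f \<longleftrightarrow> (\<forall>i j \<alpha> S.
     f (\<alpha> \<circ> var_swap i j) (gvar_swap i j ` S) = perm_gsign (gvar_swap i j) S * f \<alpha> S)"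

definition well_formed :: "sf \<Rightarrow> bool" where
  "well_formed f \<longleftrightarrow> (\<forall>\<alpha> S. f \<alpha> S \<noteq> 0 \<longrightarrow> finite (xsupp \<alpha>) \<and> finite S)"

definition bounded_degree :: "sf \<Rightarrow> bool" where
  "bounded_degree f \<longleftrightarrow> (\<exists>d. \<forall>\<alpha> S. f \<alpha> S \<noteq> 0 \<longrightarrow> xdeg \<alpha> + card S \<le> d)"

text \<open>P^{S_infty}(Q): symmetric superfunctions (bounded degree formal superseries
  invariant under all simultaneous interchanges).\<close>
definition PSinf :: "sf set" where
  "PSinf = {f. well_formed f \<and> bounded_degree f \<and> swap_invariant f}"

definition is_alg_endo :: "(sf \<Rightarrow> sf) \<Rightarrow> sf set \<Rightarrow> bool" where
  "is_alg_endo \<omega> A \<longleftrightarrow> (\<forall>f\<in>A. \<omega> f \<in> A) \<and> \<omega> sf_one = sf_one \<and>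
     (\<forall>f\<in>A. \<forall>g\<in>A. \<omega> (sf_add f g) = sf_add (\<omega> f) (\<omega> g)) \<and>
     (\<forall>c. \<forall>f\<in>A. \<omega> (sf_smul c f) = sf_smul c (\<omega> f)) \<and>
     (\<forall>f\<in>A. \<forall>g\<in>A. \<omega> (sf_mul f g) = sf_mul (\<omega> f) (\<omega> g))"

datatype mark = Bi | Over | Under | Unm

fun mark_rank :: "mark \<Rightarrow> nat" where
  "mark_rank Bi = 0" | "mark_rank Over = 1" | "mark_rank Under = 2" | "mark_rank Unm = 3"

text \<open>A superpartition is represented by the list of its parts (marking, value),
  listed in the canonical order of the paper.\<close>
definition part_before :: "mark \<times> nat \<Rightarrow> mark \<times> nat \<Rightarrow> bool" where
  "part_before a b \<longleftrightarrow> snd a > snd b \<or> (snd a = snd b \<and> mark_rank (fst a) \<le> mark_rank (fst b))"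

definition is_superpartition :: "(mark \<times> nat) list \<Rightarrow> bool" where
  "is_superpartition L \<longleftrightarrow> sorted_wrt part_before L \<and>
     distinct (filter (\<lambda>p. fst p = Over) L) \<and>
     distinct (filter (\<lambda>p. fst p = Under) L) \<and>
     (Unm, 0) \<notin> set L"

fun ptilde :: "mark \<times> nat \<Rightarrow> sf" where
  "ptilde (Bi, n) = psum_barunder n"
| "ptilde (Over, n) = psum_bar n"
| "ptilde (Under, n) = psum_under n"
| "ptilde (Unm, n) = psum n"

definition p_sp :: "(mark \<times> nat) list \<Rightarrow> sf" where
  "p_sp L = foldr (\<lambda>a acc. sf_mul (ptilde a) acc) L sf_one"

definition sp_size :: "(mark \<times> nat) list \<Rightarrow> nat" where
  "sp_size L = sum_list (map snd L)"
definition len_bi :: "(mark \<times> nat) list \<Rightarrow> nat" where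
  "len_bi L = length (filter (\<lambda>p. fst p = Bi) L)"
definition len_0 :: "(mark \<times> nat) list \<Rightarrow> nat" where
  "len_0 L = length (filter (\<lambda>p. fst p = Unm \<and> snd p \<noteq> 0) L)"

definition omega_sign :: "(mark \<times> nat) list \<Rightarrow> rat" where
  "omega_sign L = (-1) powi (int (sp_size L) - int (len_bi L) - int (len_0 L))"

end

theory Submission
  imports Defs "HOL-Library.FuncSet" "HOL-Library.Function_Algebras"
begin


definition smono :: "(nat \<Rightarrow> nat) \<Rightarrow> nat set \<Rightarrow> rat \<Rightarrow> sf" where
  "smono \<beta> T c = (\<lambda>\<alpha> S. if \<alpha> = \<beta> \<and> S = T then c else 0)"

definition unit :: "nat \<Rightarrow> nat \<Rightarrow> nat \<Rightarrow> nat" where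
  "unit i n = (\<lambda>j. if j = i then n else 0)"

lemma finite_le_funs:
  assumes "finite (xsupp \<alpha>)"
  shows "finite {\<beta>. \<forall>i. \<beta> i \<le> \<alpha> i}"
proof -
  let ?A = "xsupp \<alpha>"
  have "(\<lambda>\<beta>. restrict \<beta> ?A) ` {\<beta>. \<forall>i. \<beta> i \<le> \<alpha> i} \<subseteq> PiE ?A (\<lambda>i. {..\<alpha> i})"
    by (auto simp: PiE_def extensional_def)
  moreover have "finite (PiE ?A (\<lambda>i. {..\<alpha> i}))" using assms by (intro finite_PiE) auto
  moreover have "inj_on (\<lambda>\<beta>. restrict \<beta> ?A) {\<beta>. \<forall>i. \<beta> i \<le> \<alpha> i}"
  proof (rule inj_onI)
    fix x y assume x: "x \<in> {\<beta>. \<forall>i. \<beta> i \<le> \<alpha> i}" and y: "y \<in> {\<beta>. \<forall>i. \<beta> i \<le> \<alpha> i}"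
      and e: "restrict x ?A = restrict y ?A"
    show "x = y"
    proof
      fix i show "x i = y i"
      proof (cases "i \<in> ?A")
        case True then show ?thesis using fun_cong[OF e, of i] by simp
      next
        case False then have "\<alpha> i = 0" by (simp add: xsupp_def)
        then show ?thesis using x y by (metis le_zero_eq mem_Collect_eq)
      qed
    qed
  qed
  ultimately show ?thesis by (meson finite_imageD finite_subset)
qed

lemma infinite_le_funs:
  assumes "\<not> finite (xsupp \<alpha>)"
  shows "\<not> finite {\<beta>. \<forall>i. \<beta> i \<le> \<alpha> i}"
proof
  assume f: "finite {\<beta>. \<forall>i. \<beta> i \<le> \<alpha> i}"
  have "(\<lambda>i. unit i 1) ` xsupp \<alpha> \<subseteq> {\<beta>. \<forall>i. \<beta> i \<le> \<alpha> i}"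
    by (auto simp: unit_def xsupp_def)
  moreover have "inj_on (\<lambda>i. unit i 1) (xsupp \<alpha>)"
    by (rule inj_onI) (metis unit_def zero_neq_one)
  ultimately have "finite (xsupp \<alpha>)"
    using f by (meson finite_imageD finite_subset)
  then show False using assms by simp
qed

lemma sf_mul_infin:
  assumes "\<not> finite (xsupp \<alpha>) \<or> \<not> finite S"
  shows "sf_mul f g \<alpha> S = 0"
  using assms infinite_le_funs[of \<alpha>] by (auto simp: sf_mul_def)

lemma sf_mul_smono_left:
  "sf_mul (smono \<beta>0 T0 c) g \<alpha> S =
    (if finite (xsupp \<alpha>) \<and> finite S \<and> (\<forall>i. \<beta>0 i \<le> \<alpha> i) \<and> T0 \<subseteq> S
     then c * gsign T0 (S - T0) * g (\<lambda>i. \<alpha> i - \<beta>0 i) (S - T0) else 0)"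
proof (cases "finite (xsupp \<alpha>) \<and> finite S")
  case False then show ?thesis using sf_mul_infin by auto
next
  case True
  have "sf_mul (smono \<beta>0 T0 c) g \<alpha> S = (\<Sum>\<beta>\<in>{\<beta>. \<forall>i. \<beta> i \<le> \<alpha> i}.
      (if \<beta> = \<beta>0 then (if T0 \<in> Pow S then c * gsign T0 (S - T0) * g (\<lambda>i. \<alpha> i - \<beta> i) (S - T0) else 0) else 0))"
    unfolding sf_mul_def smono_def
  proof (rule sum.cong[OF refl])
    fix \<beta> assume "\<beta> \<in> {\<beta>. \<forall>i. \<beta> i \<le> \<alpha> i}"
    have "(\<Sum>T\<in>Pow S. gsign T (S - T) * (if \<beta> = \<beta>0 \<and> T = T0 then c else 0) * g (\<lambda>i. \<alpha> i - \<beta> i) (S - T))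
       = (\<Sum>T\<in>Pow S. if T0 = T then (if \<beta> = \<beta>0 then c * gsign T0 (S - T0) * g (\<lambda>i. \<alpha> i - \<beta> i) (S - T0) else 0) else 0)"
      by (rule sum.cong) auto
    also have "\<dots> = (if \<beta> = \<beta>0 then (if T0 \<in> Pow S then c * gsign T0 (S - T0) * g (\<lambda>i. \<alpha> i - \<beta> i) (S - T0) else 0) else 0)"
      using True by simp
    finally show "(\<Sum>T\<in>Pow S. gsign T (S - T) * (if \<beta> = \<beta>0 \<and> T = T0 then c else 0) * g (\<lambda>i. \<alpha> i - \<beta> i) (S - T))
       = (if \<beta> = \<beta>0 then (if T0 \<in> Pow S then c * gsign T0 (S - T0) * g (\<lambda>i. \<alpha> i - \<beta> i) (S - T0) else 0) else 0)" .
  qed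
  also have "\<dots> = (if (\<forall>i. \<beta>0 i \<le> \<alpha> i) then (if T0 \<in> Pow S then c * gsign T0 (S - T0) * g (\<lambda>i. \<alpha> i - \<beta>0 i) (S - T0) else 0) else 0)"
    using True finite_le_funs[of \<alpha>] by simp
  finally show ?thesis using True by auto
qed

lemma sf_mul_as_sum:
  assumes "finite (xsupp \<alpha>)" "finite S"
  shows "sf_mul f g \<alpha> S = (\<Sum>(\<beta>,T)\<in>{\<beta>. \<forall>i. \<beta> i \<le> \<alpha> i} \<times> Pow S.
            gsign T (S - T) * f \<beta> T * g (\<lambda>i. \<alpha> i - \<beta> i) (S - T))"
  unfolding sf_mul_def by (subst sum.cartesian_product) simp

definition fam :: "(nat \<Rightarrow> nat \<Rightarrow> nat) \<Rightarrow> (nat \<Rightarrow> nat set) \<Rightarrow> sf" where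
  "fam B G = (\<lambda>\<alpha> S. if \<exists>i. \<alpha> = B i \<and> S = G i then 1 else 0)"

lemma sf_mul_fam:
  assumes inj: "\<And>i j. B i = B j \<Longrightarrow> G i = G j \<Longrightarrow> i = j"
    and fa: "finite (xsupp \<alpha>)" and fS: "finite S"
    and fI: "finite {i. (\<forall>k. B i k \<le> \<alpha> k) \<and> G i \<subseteq> S}"
  shows "sf_mul (fam B G) g \<alpha> S = (\<Sum>i\<in>{i. (\<forall>k. B i k \<le> \<alpha> k) \<and> G i \<subseteq> S}.
           gsign (G i) (S - G i) * g (\<lambda>k. \<alpha> k - B i k) (S - G i))"
proof -
  let ?I = "{i. (\<forall>k. B i k \<le> \<alpha> k) \<and> G i \<subseteq> S}"
  let ?D = "{\<beta>. \<forall>i. \<beta> i \<le> \<alpha> i} \<times> Pow S"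
  let ?h = "\<lambda>(\<beta>,T). gsign T (S - T) * fam B G \<beta> T * g (\<lambda>i. \<alpha> i - \<beta> i) (S - T)"
  have "sf_mul (fam B G) g \<alpha> S = sum ?h ?D" using sf_mul_as_sum[OF fa fS] by simp
  also have "\<dots> = sum ?h ((\<lambda>i. (B i, G i)) ` ?I)"
  proof (rule sum.mono_neutral_right)
    show "finite ?D" using finite_le_funs[OF fa] fS by simp
    show "(\<lambda>i. (B i, G i)) ` ?I \<subseteq> ?D" by auto
    show "\<forall>x\<in>?D - (\<lambda>i. (B i, G i)) ` ?I. ?h x = 0"
      by (auto simp: fam_def)
  qed
  also have "\<dots> = (\<Sum>i\<in>?I. ?h (B i, G i))"
    by (subst sum.reindex) (auto intro!: inj_onI dest: inj)
  also have "\<dots> = (\<Sum>i\<in>?I. gsign (G i) (S - G i) * g (\<lambda>k. \<alpha> k - B i k) (S - G i))"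
    by (rule sum.cong) (auto simp: fam_def)
  finally show ?thesis .
qed

lemma sf_mul_fam_nz:
  assumes "sf_mul (fam B G) g \<alpha> S \<noteq> 0"
  shows "\<exists>i. (\<forall>k. B i k \<le> \<alpha> k) \<and> G i \<subseteq> S \<and> g (\<lambda>k. \<alpha> k - B i k) (S - G i) \<noteq> 0"
proof (rule ccontr)
  assume c: "\<not> ?thesis"
  have "sf_mul (fam B G) g \<alpha> S = 0"
    unfolding sf_mul_def
    by (rule sum.neutral, rule ballI, rule sum.neutral) (use c in \<open>auto simp: fam_def\<close>)
  then show False using assms by simp
qed


lemma sf_one_smono: "sf_one = smono (\<lambda>_. 0) {} 1"
  by (auto simp: sf_one_def smono_def fun_eq_iff)

lemma gsign_empty1[simp]: "gsign {} U = 1" and gsign_empty2[simp]: "gsign T {} = 1"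
  by (auto simp: gsign_def)

lemma sf_mul_one_right:
  assumes wf: "well_formed f"
  shows "sf_mul f sf_one = f"
proof (intro ext)
  fix \<alpha> S
  show "sf_mul f sf_one \<alpha> S = f \<alpha> S"
  proof (cases "finite (xsupp \<alpha>) \<and> finite S")
    case False
    then have "f \<alpha> S = 0" using wf by (auto simp: well_formed_def)
    then show ?thesis using False sf_mul_infin by simp
  next
    case True
    let ?h = "\<lambda>(\<beta>,T). gsign T (S - T) * f \<beta> T * sf_one (\<lambda>i. \<alpha> i - \<beta> i) (S - T)"
    have "sf_mul f sf_one \<alpha> S = sum ?h ({\<beta>. \<forall>i. \<beta> i \<le> \<alpha> i} \<times> Pow S)"
      using sf_mul_as_sum True by simp
    also have "\<dots> = sum ?h {(\<alpha>, S)}"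
    proof (rule sum.mono_neutral_right)
      show "finite ({\<beta>. \<forall>i. \<beta> i \<le> \<alpha> i} \<times> Pow S)" using finite_le_funs True by simp
      show "{(\<alpha>, S)} \<subseteq> {\<beta>. \<forall>i. \<beta> i \<le> \<alpha> i} \<times> Pow S" by auto
      show "\<forall>x\<in>{\<beta>. \<forall>i. \<beta> i \<le> \<alpha> i} \<times> Pow S - {(\<alpha>, S)}. ?h x = 0"
      proof (intro ballI)
        fix x assume x: "x \<in> {\<beta>. \<forall>i. \<beta> i \<le> \<alpha> i} \<times> Pow S - {(\<alpha>, S)}"
        obtain \<beta> T where xe: "x = (\<beta>, T)" by (cases x)
        have a: "\<forall>i. \<beta> i \<le> \<alpha> i" "T \<subseteq> S" "(\<beta>, T) \<noteq> (\<alpha>, S)" using x xe by auto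
        show "?h x = 0"
        proof (cases "(\<lambda>i. \<alpha> i - \<beta> i) = (\<lambda>_. 0) \<and> S - T = {}")
          case True
          then have "\<beta> = \<alpha>" using a(1) by (auto simp: fun_eq_iff intro: le_antisym)
          moreover have "T = S" using a True by auto
          ultimately show ?thesis using a by simp
        next
          case False then show ?thesis using xe by (auto simp: sf_one_def)
        qed
      qed
    qed
    also have "\<dots> = f \<alpha> S" by (simp add: sf_one_def)
    finally show ?thesis .
  qed
qed

lemma sfsum_eq:
  assumes "finite A" "{i. F i \<alpha> S \<noteq> 0} \<subseteq> A"
  shows "sfsum F \<alpha> S = (\<Sum>i\<in>A. F i \<alpha> S)"
  unfolding sfsum_def by (rule sum.mono_neutral_left) (use assms in auto)


definition sg :: "bool \<Rightarrow> rat" where "sg P = (if P then -1 else 1)"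

lemma card_sign:
  assumes "finite A"
  shows "(-1::rat) ^ card {x\<in>A. P x} = (\<Prod>x\<in>A. sg (P x))"
proof -
  have "(\<Prod>x\<in>A. sg (P x)) = (\<Prod>x\<in>{x\<in>A. P x}. (-1::rat))"
    using prod.inter_filter[OF assms, of "\<lambda>_. (-1::rat)" P] by (simp add: sg_def)
  then show ?thesis by simp
qed

lemma gsign_prod:
  assumes "finite T" "finite U"
  shows "gsign T U = (\<Prod>(t,u)\<in>T \<times> U. sg (u < t))"
proof -
  have "{(t, u). t \<in> T \<and> u \<in> U \<and> u < t} = {x\<in>T \<times> U. snd x < fst x}" by auto
  then show ?thesis unfolding gsign_def using card_sign[of "T \<times> U" "\<lambda>x. snd x < fst x"] assms
    by (simp add: case_prod_beta)
qed

lemma perm_gsign_prod: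
  assumes "finite S"
  shows "perm_gsign \<sigma> S = (\<Prod>(a,b)\<in>S \<times> S. sg (a < b \<and> \<sigma> b < \<sigma> a))"
proof -
  have "{(a, b). a \<in> S \<and> b \<in> S \<and> a < b \<and> \<sigma> b < \<sigma> a} = {x\<in>S \<times> S. fst x < snd x \<and> \<sigma> (snd x) < \<sigma> (fst x)}" by auto
  then show ?thesis unfolding perm_gsign_def using card_sign[of "S \<times> S" "\<lambda>x. fst x < snd x \<and> \<sigma> (snd x) < \<sigma> (fst x)"] assms
    by (simp add: case_prod_beta)
qed

lemma prod_swap_pairs:
  "(\<Prod>(a,b)\<in>U \<times> T. h a b) = (\<Prod>(t,u)\<in>T \<times> U. (h u t :: rat))"
  by (rule prod.reindex_bij_witness[where i="\<lambda>(t,u). (u,t)" and j="\<lambda>(a,b). (b,a)"]) auto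

lemma sign_key:
  assumes inj: "inj \<sigma>" and fT: "finite T" and fU: "finite U" and dj: "T \<inter> U = {}"
  shows "gsign (\<sigma> ` T) (\<sigma> ` U) * perm_gsign \<sigma> T * perm_gsign \<sigma> U
       = perm_gsign \<sigma> (T \<union> U) * gsign T U"
proof -
  let ?h = "\<lambda>(a,b). sg (a < b \<and> \<sigma> b < \<sigma> a)"
  have split: "(T \<union> U) \<times> (T \<union> U) = ((T \<times> T) \<union> (U \<times> U)) \<union> ((T \<times> U) \<union> (U \<times> T))" by auto
  have ps: "perm_gsign \<sigma> (T \<union> U) = perm_gsign \<sigma> T * perm_gsign \<sigma> U *
      ((\<Prod>x\<in>T \<times> U. ?h x) * (\<Prod>x\<in>U \<times> T. ?h x))"
    unfolding perm_gsign_prod[OF finite_UnI[OF fT fU]] perm_gsign_prod[OF fT] perm_gsign_prod[OF fU] split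
    apply (subst prod.union_disjoint)
    using fT fU dj apply (auto)[3]
    apply (subst prod.union_disjoint)
    using fT fU dj apply (auto)[3]
    apply (subst prod.union_disjoint)
    using fT fU dj apply (auto)[3]
    apply (simp add: ac_simps)
    done
  have c2: "(\<Prod>x\<in>U \<times> T. ?h x) = (\<Prod>(t,u)\<in>T \<times> U. sg (u < t \<and> \<sigma> t < \<sigma> u))"
    using prod_swap_pairs[of "\<lambda>a b. sg (a < b \<and> \<sigma> b < \<sigma> a)" U T] by simp
  have g1: "gsign (\<sigma> ` T) (\<sigma> ` U) = (\<Prod>(t,u)\<in>T \<times> U. sg (\<sigma> u < \<sigma> t))"
  proof -
    have "gsign (\<sigma> ` T) (\<sigma> ` U) = (\<Prod>(x,y)\<in>\<sigma> ` T \<times> \<sigma> ` U. sg (y < x))"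
      using gsign_prod fT fU by simp
    also have "\<sigma> ` T \<times> \<sigma> ` U = (\<lambda>(t,u). (\<sigma> t, \<sigma> u)) ` (T \<times> U)" by auto
    also have "(\<Prod>(x,y)\<in>(\<lambda>(t,u). (\<sigma> t, \<sigma> u)) ` (T \<times> U). sg (y < x)) = (\<Prod>(t,u)\<in>T \<times> U. sg (\<sigma> u < \<sigma> t))"
      by (subst prod.reindex) (auto intro!: inj_onI prod.cong simp: inj_eq[OF inj])
    finally show ?thesis .
  qed
  have pw: "(\<Prod>(t,u)\<in>T \<times> U. sg (\<sigma> u < \<sigma> t)) =
        (\<Prod>x\<in>T \<times> U. ?h x) * (\<Prod>(t,u)\<in>T \<times> U. sg (u < t \<and> \<sigma> t < \<sigma> u)) * (\<Prod>(t,u)\<in>T \<times> U. sg (u < t))"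
    unfolding prod.distrib[symmetric]
  proof (rule prod.cong[OF refl], clarify)
    fix t u assume tu: "t \<in> T" "u \<in> U"
    then have "t \<noteq> u" using dj by auto
    moreover then have "\<sigma> t \<noteq> \<sigma> u" using inj by (auto simp: inj_eq)
    ultimately show "sg (\<sigma> u < \<sigma> t) = sg (t < u \<and> \<sigma> u < \<sigma> t) * sg (u < t \<and> \<sigma> t < \<sigma> u) * sg (u < t)"
      by (cases "t < u"; cases "\<sigma> u < \<sigma> t") (auto simp: sg_def)
  qed
  show ?thesis using ps c2 g1 pw gsign_prod[OF fT fU] by (simp add: ac_simps)
qed

lemma var_swap_invol[simp]: "var_swap i j (var_swap i j k) = k"
  by (auto simp: var_swap_def)

lemma gvar_swap_invol[simp]: "gvar_swap i j (gvar_swap i j a) = a"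
  by (simp add: gvar_swap_def)

lemma inj_gvar_swap: "inj (gvar_swap i j)"
  by (metis gvar_swap_invol injI)

lemma inj_var_swap: "inj (var_swap i j)"
  by (metis var_swap_invol injI)

lemma xsupp_comp_swap: "xsupp (\<alpha> \<circ> var_swap i j) = var_swap i j ` xsupp \<alpha>"
  by (auto simp: xsupp_def image_iff) (metis var_swap_invol)

lemma finite_xsupp_comp_swap: "finite (xsupp (\<alpha> \<circ> var_swap i j)) \<longleftrightarrow> finite (xsupp \<alpha>)"
  by (simp add: xsupp_comp_swap finite_image_iff inj_on_subset[OF inj_var_swap])

lemma swap_inv_mul:
  assumes f: "swap_invariant f" and g: "swap_invariant g"
  shows "swap_invariant (sf_mul f g)"
  unfolding swap_invariant_def
proof (intro allI)
  fix i j \<alpha> S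
  let ?s = "var_swap i j" and ?\<sigma> = "gvar_swap i j"
  show "sf_mul f g (\<alpha> \<circ> ?s) (?\<sigma> ` S) = perm_gsign ?\<sigma> S * sf_mul f g \<alpha> S"
  proof (cases "finite (xsupp \<alpha>) \<and> finite S")
    case False
    have "\<not> finite (xsupp (\<alpha> \<circ> ?s)) \<or> \<not> finite (?\<sigma> ` S)"
      using False by (simp add: finite_xsupp_comp_swap finite_image_iff inj_on_subset[OF inj_gvar_swap])
    then show ?thesis using False sf_mul_infin by simp
  next
    case True
    then have fa: "finite (xsupp \<alpha>)" and fS: "finite S" by auto
    have fa': "finite (xsupp (\<alpha> \<circ> ?s))" using fa by (simp add: finite_xsupp_comp_swap)
    have fS': "finite (?\<sigma> ` S)" using fS by simp
    let ?D = "{\<beta>. \<forall>k. \<beta> k \<le> \<alpha> k} \<times> Pow S"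
    let ?D' = "{\<beta>. \<forall>k. \<beta> k \<le> (\<alpha> \<circ> ?s) k} \<times> Pow (?\<sigma> ` S)"
    let ?t = "\<lambda>(\<beta>,T). gsign T (S - T) * f \<beta> T * g (\<lambda>k. \<alpha> k - \<beta> k) (S - T)"
    let ?t' = "\<lambda>(\<beta>,T). gsign T (?\<sigma> ` S - T) * f \<beta> T * g (\<lambda>k. (\<alpha> \<circ> ?s) k - \<beta> k) (?\<sigma> ` S - T)"
    have "sf_mul f g (\<alpha> \<circ> ?s) (?\<sigma> ` S) = sum ?t' ?D'"
      using sf_mul_as_sum[OF fa' fS'] by simp
    also have "\<dots> = sum (\<lambda>x. perm_gsign ?\<sigma> S * ?t x) ?D"
    proof (rule sum.reindex_bij_witness[where i="\<lambda>(\<beta>,T). (\<beta> \<circ> ?s, ?\<sigma> ` T)" and j="\<lambda>(\<beta>,T). (\<beta> \<circ> ?s, ?\<sigma> ` T)"])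
      fix a assume "a \<in> ?D'"
      then show "(case case a of (\<beta>, T) \<Rightarrow> (\<beta> \<circ> ?s, ?\<sigma> ` T) of (\<beta>, T) \<Rightarrow> (\<beta> \<circ> ?s, ?\<sigma> ` T)) = a"
        by (auto simp: image_image comp_def)
    next
      fix a assume "a \<in> ?D'"
      then show "(case a of (\<beta>, T) \<Rightarrow> (\<beta> \<circ> ?s, ?\<sigma> ` T)) \<in> ?D"
        apply (auto simp: image_image)
        apply (metis var_swap_invol)
        done
    next
      fix b assume "b \<in> ?D"
      then show "(case case b of (\<beta>, T) \<Rightarrow> (\<beta> \<circ> ?s, ?\<sigma> ` T) of (\<beta>, T) \<Rightarrow> (\<beta> \<circ> ?s, ?\<sigma> ` T)) = b"
        by (auto simp: image_image comp_def)
    next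
      fix b assume "b \<in> ?D"
      then show "(case b of (\<beta>, T) \<Rightarrow> (\<beta> \<circ> ?s, ?\<sigma> ` T)) \<in> ?D'"
        by auto
    next
      fix a assume a: "a \<in> ?D'"
      obtain \<beta>' T' where ae: "a = (\<beta>', T')" by (cases a)
      define \<beta> where "\<beta> = \<beta>' \<circ> ?s"
      define T where "T = ?\<sigma> ` T'"
      have b1: "\<beta> \<circ> ?s = \<beta>'" by (simp add: \<beta>_def comp_def)
      have b2: "?\<sigma> ` T = T'" by (simp add: T_def image_image)
      have b: "(\<beta>, T) \<in> ?D" using a ae unfolding \<beta>_def T_def
        apply (auto simp: image_image)
        apply (metis var_swap_invol)
        done
      have TS: "T \<subseteq> S" using b by auto
      have fT: "finite T" using TS fS finite_subset by blast
      have d: "?\<sigma> ` S - ?\<sigma> ` T = ?\<sigma> ` (S - T)" by (simp add: image_set_diff[OF inj_gvar_swap])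
      have gg: "(\<lambda>k. (\<alpha> \<circ> ?s) k - (\<beta> \<circ> ?s) k) = (\<lambda>k. \<alpha> k - \<beta> k) \<circ> ?s" by (simp add: comp_def)
      have key: "gsign (?\<sigma> ` T) (?\<sigma> ` (S - T)) * perm_gsign ?\<sigma> T * perm_gsign ?\<sigma> (S - T)
          = perm_gsign ?\<sigma> S * gsign T (S - T)"
        using sign_key[OF inj_gvar_swap fT _, of "S - T" i j] fS TS by (simp add: Un_absorb1)
      have f1: "f (\<beta> \<circ> ?s) (?\<sigma> ` T) = perm_gsign ?\<sigma> T * f \<beta> T"
        using f unfolding swap_invariant_def by blast
      have g1: "g (\<lambda>k. (\<alpha> \<circ> ?s) k - (\<beta> \<circ> ?s) k) (?\<sigma> ` S - ?\<sigma> ` T) = perm_gsign ?\<sigma> (S - T) * g (\<lambda>k. \<alpha> k - \<beta> k) (S - T)"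
        unfolding gg d using g unfolding swap_invariant_def by blast
      have "?t' (\<beta> \<circ> ?s, ?\<sigma> ` T) = gsign (?\<sigma> ` T) (?\<sigma> ` S - ?\<sigma> ` T) * f (\<beta> \<circ> ?s) (?\<sigma> ` T) * g (\<lambda>k. (\<alpha> \<circ> ?s) k - (\<beta> \<circ> ?s) k) (?\<sigma> ` S - ?\<sigma> ` T)"
        by (simp only: prod.case)
      also have "\<dots> = gsign (?\<sigma> ` T) (?\<sigma> ` (S - T)) * (perm_gsign ?\<sigma> T * f \<beta> T)
             * (perm_gsign ?\<sigma> (S - T) * g (\<lambda>k. \<alpha> k - \<beta> k) (S - T))"
        by (simp only: f1 g1 d[symmetric])
      also have "\<dots> = perm_gsign ?\<sigma> S * ?t (\<beta>, T)"
        using key by (simp add: ac_simps)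
      finally have X: "?t' (\<beta> \<circ> ?s, ?\<sigma> ` T) = perm_gsign ?\<sigma> S * ?t (\<beta>, T)" .
      show "perm_gsign ?\<sigma> S * ?t ((\<lambda>(\<beta>,T). (\<beta> \<circ> ?s, ?\<sigma> ` T)) a) = ?t' a"
        using X ae b1 b2 unfolding \<beta>_def T_def by (simp only: prod.case image_image gvar_swap_invol image_ident comp_assoc)
    qed
    also have "\<dots> = perm_gsign ?\<sigma> S * sf_mul f g \<alpha> S"
      using sf_mul_as_sum[OF fa fS] by (simp add: sum_distrib_left)
    finally show ?thesis .
  qed
qed


lemma xdeg_eq_sum:
  assumes "finite F" "xsupp \<alpha> \<subseteq> F"
  shows "xdeg \<alpha> = (\<Sum>i\<in>F. \<alpha> i)"
  unfolding xdeg_def by (rule sum.mono_neutral_left) (use assms in \<open>auto simp: xsupp_def\<close>)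

lemma well_formed_mul: "well_formed (sf_mul f g)"
  unfolding well_formed_def using sf_mul_infin by blast

lemma bounded_degree_mul:
  assumes f: "bounded_degree f" and g: "bounded_degree g"
  shows "bounded_degree (sf_mul f g)"
proof -
  obtain d1 where d1: "\<And>\<alpha> S. f \<alpha> S \<noteq> 0 \<Longrightarrow> xdeg \<alpha> + card S \<le> d1" using f by (auto simp: bounded_degree_def)
  obtain d2 where d2: "\<And>\<alpha> S. g \<alpha> S \<noteq> 0 \<Longrightarrow> xdeg \<alpha> + card S \<le> d2" using g by (auto simp: bounded_degree_def)
  have "xdeg \<alpha> + card S \<le> d1 + d2" if nz: "sf_mul f g \<alpha> S \<noteq> 0" for \<alpha> S
  proof -
    have fin: "finite (xsupp \<alpha>)" "finite S" using nz sf_mul_infin by blast+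
    let ?h = "\<lambda>(\<beta>,T). gsign T (S - T) * f \<beta> T * g (\<lambda>i. \<alpha> i - \<beta> i) (S - T)"
    have "sum ?h ({\<beta>. \<forall>i. \<beta> i \<le> \<alpha> i} \<times> Pow S) \<noteq> 0" using nz unfolding sf_mul_as_sum[OF fin] .
    then obtain x where xD: "x \<in> {\<beta>. \<forall>i. \<beta> i \<le> \<alpha> i} \<times> Pow S" and hx: "?h x \<noteq> 0"
      by (meson sum.not_neutral_contains_not_neutral)
    obtain \<beta> T where xe: "x = (\<beta>, T)" by (cases x)
    have bT: "(\<beta>, T) \<in> {\<beta>. \<forall>i. \<beta> i \<le> \<alpha> i} \<times> Pow S" using xD xe by simp
    have t: "gsign T (S - T) * f \<beta> T * g (\<lambda>i. \<alpha> i - \<beta> i) (S - T) \<noteq> 0" using hx xe by simp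
    have fz: "f \<beta> T \<noteq> 0" and gz: "g (\<lambda>i. \<alpha> i - \<beta> i) (S - T) \<noteq> 0" using t by auto
    have le: "\<forall>i. \<beta> i \<le> \<alpha> i" and TS: "T \<subseteq> S" using bT by auto
    have s1: "xsupp \<beta> \<subseteq> xsupp \<alpha>" unfolding xsupp_def using le by (metis (mono_tags) Collect_mono le_zero_eq)
    have s2: "xsupp (\<lambda>i. \<alpha> i - \<beta> i) \<subseteq> xsupp \<alpha>" by (auto simp: xsupp_def)
    have "xdeg \<alpha> = xdeg \<beta> + xdeg (\<lambda>i. \<alpha> i - \<beta> i)"
    proof -
      have "(\<Sum>i\<in>xsupp \<alpha>. \<alpha> i) = (\<Sum>i\<in>xsupp \<alpha>. \<beta> i + (\<alpha> i - \<beta> i))"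
        using le by (intro sum.cong) auto
      also have "\<dots> = (\<Sum>i\<in>xsupp \<alpha>. \<beta> i) + (\<Sum>i\<in>xsupp \<alpha>. \<alpha> i - \<beta> i)"
        by (rule sum.distrib)
      finally show ?thesis
        using xdeg_eq_sum[OF fin(1) order_refl] xdeg_eq_sum[OF fin(1) s1] xdeg_eq_sum[OF fin(1) s2]
        by simp
    qed
    moreover have "card S = card T + card (S - T)"
    proof -
      have fT: "finite T" using TS fin(2) finite_subset by blast
      have "card (S - T) = card S - card T" using card_Diff_subset[OF fT TS] .
      moreover have "card T \<le> card S" using card_mono[OF fin(2) TS] .
      ultimately show ?thesis by simp
    qed
    ultimately show ?thesis using d1[OF fz] d2[OF gz] by simp
  qed
  then show ?thesis unfolding bounded_degree_def by blast
qed

lemma PSinf_mul: "f \<in> PSinf \<Longrightarrow> g \<in> PSinf \<Longrightarrow> sf_mul f g \<in> PSinf"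
  unfolding PSinf_def using well_formed_mul bounded_degree_mul swap_inv_mul by blast

lemma sf_add_eq: "sf_add f g = f + g"
  by (simp add: sf_add_def fun_eq_iff)

lemma sf_zero_eq: "sf_zero = 0"
  by (simp add: sf_zero_def fun_eq_iff)

lemma PSinf_iff: "f \<in> PSinf \<longleftrightarrow> (\<forall>\<alpha> S. f \<alpha> S \<noteq> 0 \<longrightarrow> finite (xsupp \<alpha>) \<and> finite S) \<and>
   (\<exists>d. \<forall>\<alpha> S. f \<alpha> S \<noteq> 0 \<longrightarrow> xdeg \<alpha> + card S \<le> d) \<and>
   (\<forall>i j \<alpha> S. f (\<alpha> \<circ> var_swap i j) (gvar_swap i j ` S) = perm_gsign (gvar_swap i j) S * f \<alpha> S)"
  unfolding PSinf_def well_formed_def bounded_degree_def swap_invariant_def by simp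

lemma PSinf_lin: 
  assumes f: "f \<in> PSinf" and g: "g \<in> PSinf"
  shows "(\<lambda>\<alpha> S. a * f \<alpha> S + b * g \<alpha> S) \<in> PSinf"
proof -
  obtain d1 where d1: "\<And>\<alpha> S. f \<alpha> S \<noteq> 0 \<Longrightarrow> xdeg \<alpha> + card S \<le> d1" using f by (auto simp: PSinf_iff)
  obtain d2 where d2: "\<And>\<alpha> S. g \<alpha> S \<noteq> 0 \<Longrightarrow> xdeg \<alpha> + card S \<le> d2" using g by (auto simp: PSinf_iff)
  have w1: "\<And>\<alpha> S. f \<alpha> S \<noteq> 0 \<Longrightarrow> finite (xsupp \<alpha>) \<and> finite S" using f by (simp add: PSinf_iff)
  have w2: "\<And>\<alpha> S. g \<alpha> S \<noteq> 0 \<Longrightarrow> finite (xsupp \<alpha>) \<and> finite S" using g by (simp add: PSinf_iff)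
  have s1: "\<And>i j \<alpha> S. f (\<alpha> \<circ> var_swap i j) (gvar_swap i j ` S) = perm_gsign (gvar_swap i j) S * f \<alpha> S" using f by (simp add: PSinf_iff)
  have s2: "\<And>i j \<alpha> S. g (\<alpha> \<circ> var_swap i j) (gvar_swap i j ` S) = perm_gsign (gvar_swap i j) S * g \<alpha> S" using g by (simp add: PSinf_iff)
  have A: "a * f \<alpha> S + b * g \<alpha> S \<noteq> 0 \<Longrightarrow> finite (xsupp \<alpha>) \<and> finite S" for \<alpha> S
  proof -
    assume "a * f \<alpha> S + b * g \<alpha> S \<noteq> 0"
    then have "f \<alpha> S \<noteq> 0 \<or> g \<alpha> S \<noteq> 0" by auto
    then show ?thesis using w1 w2 by blast
  qed
  have B: "a * f \<alpha> S + b * g \<alpha> S \<noteq> 0 \<Longrightarrow> xdeg \<alpha> + card S \<le> d1 + d2" for \<alpha> S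
  proof -
    assume "a * f \<alpha> S + b * g \<alpha> S \<noteq> 0"
    then have "f \<alpha> S \<noteq> 0 \<or> g \<alpha> S \<noteq> 0" by auto
    then show ?thesis using d1 d2 by fastforce
  qed
  have C: "a * f (\<alpha> \<circ> var_swap i j) (gvar_swap i j ` S) + b * g (\<alpha> \<circ> var_swap i j) (gvar_swap i j ` S)
      = perm_gsign (gvar_swap i j) S * (a * f \<alpha> S + b * g \<alpha> S)" for i j \<alpha> S
    by (simp only: s1 s2) (simp add: algebra_simps)
  show ?thesis unfolding PSinf_iff using A B C by blast
qed

lemma PSinf_add: "f \<in> PSinf \<Longrightarrow> g \<in> PSinf \<Longrightarrow> f + g \<in> PSinf"
  using PSinf_lin[of f g 1 1] by (simp add: plus_fun_def)

lemma PSinf_minus: "f \<in> PSinf \<Longrightarrow> g \<in> PSinf \<Longrightarrow> f - g \<in> PSinf"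
  using PSinf_lin[of f g 1 "-1"] by (simp add: fun_diff_def)

lemma PSinf_smul: "f \<in> PSinf \<Longrightarrow> sf_smul c f \<in> PSinf"
  using PSinf_lin[of f f c 0] by (simp add: sf_smul_def)

lemma PSinf_zero: "0 \<in> PSinf"
  unfolding PSinf_iff by simp

lemma PSinf_sum: "(\<And>x. x \<in> A \<Longrightarrow> F x \<in> PSinf) \<Longrightarrow> sum F A \<in> PSinf"
  by (induction A rule: infinite_finite_induct) (auto intro: PSinf_add PSinf_zero)

lemma perm_gsign_empty[simp]: "perm_gsign \<sigma> {} = 1"
  by (simp add: perm_gsign_def)

lemma PSinf_one: "sf_one \<in> PSinf"
proof -
  have A: "sf_one \<alpha> S \<noteq> 0 \<Longrightarrow> finite (xsupp \<alpha>) \<and> finite S" for \<alpha> S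
    by (cases "\<alpha> = (\<lambda>_. 0) \<and> S = {}") (auto simp: sf_one_def xsupp_def)
  have B: "sf_one \<alpha> S \<noteq> 0 \<Longrightarrow> xdeg \<alpha> + card S \<le> 0" for \<alpha> S
    by (cases "\<alpha> = (\<lambda>_. 0) \<and> S = {}") (auto simp: sf_one_def xsupp_def xdeg_def)
  have C: "sf_one (\<alpha> \<circ> var_swap i j) (gvar_swap i j ` S) = perm_gsign (gvar_swap i j) S * sf_one \<alpha> S" for i j \<alpha> S
  proof -
    have "(\<alpha> \<circ> var_swap i j = (\<lambda>_. 0)) \<longleftrightarrow> \<alpha> = (\<lambda>_. 0)"
      by (auto simp: fun_eq_iff) (metis var_swap_invol)
    then show ?thesis by (auto simp: sf_one_def)
  qed
  show ?thesis unfolding PSinf_iff using A B C by blast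
qed

locale endo =
  fixes \<omega> :: "sf \<Rightarrow> sf"
  assumes endo: "is_alg_endo \<omega> PSinf"
begin

lemma om_in: "f \<in> PSinf \<Longrightarrow> \<omega> f \<in> PSinf" using endo by (simp add: is_alg_endo_def)
lemma om_add: "f \<in> PSinf \<Longrightarrow> g \<in> PSinf \<Longrightarrow> \<omega> (f + g) = \<omega> f + \<omega> g"
  using endo by (simp add: is_alg_endo_def sf_add_eq)
lemma om_smul: "f \<in> PSinf \<Longrightarrow> \<omega> (sf_smul c f) = sf_smul c (\<omega> f)"
  using endo by (simp add: is_alg_endo_def)
lemma om_mul: "f \<in> PSinf \<Longrightarrow> g \<in> PSinf \<Longrightarrow> \<omega> (sf_mul f g) = sf_mul (\<omega> f) (\<omega> g)"
  using endo by (simp add: is_alg_endo_def)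
lemma om_one: "\<omega> sf_one = sf_one"
  using endo by (simp add: is_alg_endo_def)
lemma om_zero: "\<omega> 0 = 0"
  using om_add[OF PSinf_zero PSinf_zero] by simp
lemma om_sum: "(\<And>x. x \<in> A \<Longrightarrow> F x \<in> PSinf) \<Longrightarrow> \<omega> (sum F A) = (\<Sum>x\<in>A. \<omega> (F x))"
  by (induction A rule: infinite_finite_induct) (auto simp: om_zero om_add PSinf_sum)
lemma om_minus: "f \<in> PSinf \<Longrightarrow> g \<in> PSinf \<Longrightarrow> \<omega> (f - g) = \<omega> f - \<omega> g"
proof -
  assume f: "f \<in> PSinf" and g: "g \<in> PSinf"
  have "\<omega> (f - g) + \<omega> g = \<omega> f" using om_add[OF PSinf_minus[OF f g] g] by simp
  then show ?thesis by (simp add: eq_diff_eq)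
qed

end


definition Ej :: "nat set \<Rightarrow> nat \<Rightarrow> (nat \<Rightarrow> nat) \<Rightarrow> rat" where
  "Ej J m \<alpha> = (if finite (xsupp \<alpha>) \<and> (\<forall>i. \<alpha> i \<le> 1) \<and> (\<forall>j\<in>J. \<alpha> j = 0) \<and> card (xsupp \<alpha>) = m then 1 else 0)"

definition Hh :: "nat \<Rightarrow> (nat \<Rightarrow> nat) \<Rightarrow> rat" where
  "Hh m \<alpha> = (if finite (xsupp \<alpha>) \<and> xdeg \<alpha> = m then 1 else 0)"

lemma esym_eq: "esym m \<alpha> S = (if S = {} then Ej {} m \<alpha> else 0)"
  by (simp add: esym_def Ej_def)

lemma hsym_eq: "hsym m \<alpha> S = (if S = {} then Hh m \<alpha> else 0)"
  by (simp add: hsym_def Hh_def)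

lemma xsupp_upd: "xsupp (\<alpha>(i := v)) = (if v = 0 then xsupp \<alpha> - {i} else insert i (xsupp \<alpha>))"
  by (auto simp: xsupp_def)

lemma finite_xsupp_upd[simp]: "finite (xsupp (\<alpha>(i := v))) \<longleftrightarrow> finite (xsupp \<alpha>)"
  by (simp add: xsupp_upd)

lemma KL:
  assumes iJ: "i \<notin> J" and fa: "finite (xsupp \<alpha>)"
  shows "(\<Sum>r\<le>m. (-1)^r * (if r \<le> \<alpha> i then Ej J (m - r) (\<alpha>(i := \<alpha> i - r)) else 0)) = Ej (insert i J) m \<alpha>"
proof (cases "\<alpha> i = 0")
  case True
  have "(\<Sum>r\<le>m. (-1)^r * (if r \<le> \<alpha> i then Ej J (m - r) (\<alpha>(i := \<alpha> i - r)) else 0))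
      = (\<Sum>r\<le>m. if r = 0 then Ej J m \<alpha> else 0)"
    by (rule sum.cong) (auto simp: True fun_upd_idem)
  also have "\<dots> = Ej J m \<alpha>" by simp
  also have "\<dots> = Ej (insert i J) m \<alpha>" using True by (simp add: Ej_def)
  finally show ?thesis .
next
  case False
  define k where "k = \<alpha> i"
  have k1: "k \<ge> 1" using False k_def by simp
  define a where "a = Ej J (m - (k - 1)) (\<alpha>(i := 1))"
  define b where "b = Ej J (m - k) (\<alpha>(i := 0))"
  have pw: "(-1)^r * (if r \<le> \<alpha> i then Ej J (m - r) (\<alpha>(i := \<alpha> i - r)) else 0)
      = (if r = k - 1 then (-1)^(k-1) * a else 0) + (if r = k then (-1)^k * b else 0)" for r :: nat
  proof -
    consider "r = k - 1" | "r = k" | "r + 2 \<le> k" | "k < r" using k1 by linarith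
    then show ?thesis
    proof cases
      case 1
      have "k - 1 \<noteq> k" using k1 by simp
      then show ?thesis using 1 k1 by (simp add: a_def k_def)
    next
      case 2
      have "k \<noteq> k - 1" using k1 by simp
      then show ?thesis using 2 k1 by (simp add: b_def k_def)
    next
      case 3
      then have "(\<alpha>(i := \<alpha> i - r)) i \<ge> 2" by (simp add: k_def)
      then have "Ej J (m - r) (\<alpha>(i := \<alpha> i - r)) = 0" unfolding Ej_def
        by (metis (no_types, lifting) not_one_le_zero numeral_le_one_iff order_trans semiring_norm(69))
      then show ?thesis using 3 by auto
    next
      case 4 then show ?thesis by (auto simp: k_def)
    qed
  qed
  have "(\<Sum>r\<le>m. (-1)^r * (if r \<le> \<alpha> i then Ej J (m - r) (\<alpha>(i := \<alpha> i - r)) else 0))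
     = (\<Sum>r\<le>m. (if r = k - 1 then (-1)^(k-1) * a else 0) + (if r = k then (-1)^k * b else 0))"
    using pw by simp
  also have "\<dots> = (if k - 1 \<le> m then (-1)^(k-1) * a else 0) + (if k \<le> m then (-1)^k * b else 0)"
    by (simp add: sum.distrib)
  also have "\<dots> = 0"
  proof (cases "k \<le> m")
    case True
    have i_in: "i \<in> xsupp \<alpha>" using False by (simp add: xsupp_def)
    have c1: "card (xsupp (\<alpha>(i := 1))) = card (xsupp \<alpha>)"
      using i_in by (simp add: xsupp_upd insert_absorb)
    have c0: "card (xsupp (\<alpha>(i := 0))) = card (xsupp \<alpha>) - 1"
      using i_in fa by (simp add: xsupp_upd)
    have cpos: "card (xsupp \<alpha>) \<ge> 1"
    proof -
      have "xsupp \<alpha> \<noteq> {}" using i_in by blast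
      then have "card (xsupp \<alpha>) \<noteq> 0" using fa by simp
      then show ?thesis by simp
    qed
    have e1: "(\<forall>l. (\<alpha>(i:=1)) l \<le> 1) = (\<forall>l. (\<alpha>(i:=0)) l \<le> 1)" by auto
    have e2: "(\<forall>j\<in>J. (\<alpha>(i:=1)) j = 0) = (\<forall>j\<in>J. (\<alpha>(i:=0)) j = 0)" using iJ by auto
    have e3: "(card (xsupp (\<alpha>(i:=1))) = m - (k-1)) = (card (xsupp (\<alpha>(i:=0))) = m - k)"
      unfolding c1 c0 using cpos True k1 by arith
    have ab: "a = b"
      unfolding a_def b_def Ej_def finite_xsupp_upd e1 e2 e3 ..
    have s0: "(-1::rat)^(k-1) + (-1)^k = 0"
    proof -
      obtain k' where "k = Suc k'" using k1 by (cases k) auto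
      then show ?thesis by simp
    qed
    have km: "k - 1 \<le> m" using True by simp
    have "(-1::rat)^(k-1) * a + (-1)^k * b = ((-1)^(k-1) + (-1)^k) * b"
      using ab by (simp add: distrib_right)
    then show ?thesis using s0 True km by simp
  next
    case False
    have "a = 0" if "k - 1 \<le> m"
    proof -
      have "k - 1 = m" using that False by simp
      then have "m - (k - 1) = 0" by simp
      moreover have "card (xsupp (\<alpha>(i := 1))) \<noteq> 0" using fa by (simp add: xsupp_upd)
      ultimately show ?thesis by (simp add: a_def Ej_def)
    qed
    then show ?thesis using False by simp
  qed
  finally have L: "(\<Sum>r\<le>m. (-1)^r * (if r \<le> \<alpha> i then Ej J (m - r) (\<alpha>(i := \<alpha> i - r)) else 0)) = 0" .
  have "Ej (insert i J) m \<alpha> = 0" using False by (simp add: Ej_def)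
  then show ?thesis using L by simp
qed

lemma xdeg_upd:
  assumes fa: "finite (xsupp \<alpha>)"
  shows "xdeg (\<alpha>(i := v)) + \<alpha> i = xdeg \<alpha> + v"
proof -
  let ?F = "insert i (xsupp \<alpha>)"
  have fF: "finite ?F" using fa by simp
  have "xdeg (\<alpha>(i := v)) = (\<Sum>l\<in>?F. (\<alpha>(i := v)) l)"
    by (rule xdeg_eq_sum[OF fF]) (auto simp: xsupp_def)
  also have "\<dots> = (\<alpha>(i := v)) i + (\<Sum>l\<in>?F - {i}. (\<alpha>(i := v)) l)"
    by (rule sum.remove[OF fF]) simp
  also have "\<dots> = v + (\<Sum>l\<in>?F - {i}. \<alpha> l)"
  proof -
    have "(\<Sum>l\<in>?F - {i}. (\<alpha>(i := v)) l) = (\<Sum>l\<in>?F - {i}. \<alpha> l)" by (rule sum.cong) auto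
    then show ?thesis by simp
  qed
  finally have 1: "xdeg (\<alpha>(i := v)) = v + (\<Sum>l\<in>?F - {i}. \<alpha> l)" .
  have "xdeg \<alpha> = (\<Sum>l\<in>?F. \<alpha> l)" by (rule xdeg_eq_sum[OF fF]) auto
  also have "\<dots> = \<alpha> i + (\<Sum>l\<in>?F - {i}. \<alpha> l)"
    by (rule sum.remove[OF fF]) simp
  finally show ?thesis using 1 by simp
qed

lemma le_xdeg:
  assumes fa: "finite (xsupp \<alpha>)"
  shows "\<alpha> i \<le> xdeg \<alpha>"
proof -
  have "xdeg (\<alpha>(i := 0)) + \<alpha> i = xdeg \<alpha>" using xdeg_upd[OF fa, of i 0] by (simp only: add_0_right)
  then show ?thesis by linarith
qed

lemma HL:
  assumes fa: "finite (xsupp \<alpha>)"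
  shows "(\<Sum>r\<le>m. (if r \<le> \<alpha> i then Hh (m - r) (\<alpha>(i := \<alpha> i - r)) else 0)) = of_nat (\<alpha> i + 1) * Hh m \<alpha>"
proof -
  have aid: "\<alpha> i \<le> xdeg \<alpha>" by (rule le_xdeg[OF fa])
  have pw: "(if r \<le> \<alpha> i then Hh (m - r) (\<alpha>(i := \<alpha> i - r)) else 0) = (if r \<le> \<alpha> i \<and> xdeg \<alpha> = m then 1 else 0)"
    if "r \<le> m" for r
  proof (cases "r \<le> \<alpha> i")
    case True
    have "xdeg (\<alpha>(i := \<alpha> i - r)) + \<alpha> i = xdeg \<alpha> + (\<alpha> i - r)" by (rule xdeg_upd[OF fa])
    then have "xdeg (\<alpha>(i := \<alpha> i - r)) = xdeg \<alpha> - r" using True by simp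
    then show ?thesis using True that aid fa by (auto simp: Hh_def)
  qed simp
  have "(\<Sum>r\<le>m. (if r \<le> \<alpha> i then Hh (m - r) (\<alpha>(i := \<alpha> i - r)) else 0))
      = (\<Sum>r\<le>m. (if r \<le> \<alpha> i \<and> xdeg \<alpha> = m then 1 else 0))"
    using pw by (intro sum.cong) auto
  also have "\<dots> = of_nat (\<alpha> i + 1) * Hh m \<alpha>"
  proof (cases "xdeg \<alpha> = m")
    case True
    then have e: "{..m} \<inter> {r. r \<le> \<alpha> i} = {..\<alpha> i}" using aid by auto
    then have "(\<Sum>r\<le>m. (if r \<le> \<alpha> i \<and> xdeg \<alpha> = m then 1 else 0 :: rat)) = of_nat (card {..\<alpha> i})"
      using True by (simp add: sum.If_cases e)
    then show ?thesis using True fa by (simp add: Hh_def)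
  next
    case False then show ?thesis by (simp add: Hh_def)
  qed
  finally show ?thesis .
qed


lemma xpow_eq: "xpow i n = smono (unit i n) {} 1"
  by (simp add: xpow_def smono_def unit_def fun_eq_iff)
lemma phi_eq: "phi i = smono (\<lambda>_. 0) {2*i} 1"
  by (simp add: phi_def phi_idx_def smono_def fun_eq_iff)
lemma theta_eq: "theta i = smono (\<lambda>_. 0) {2*i+1} 1"
  by (simp add: theta_def theta_idx_def smono_def fun_eq_iff)

lemma unit_le_iff: "(\<forall>k. unit i r k \<le> \<alpha> k) \<longleftrightarrow> r \<le> \<alpha> i"
  by (auto simp: unit_def)
lemma unit_minus: "(\<lambda>k. \<alpha> k - unit i r k) = \<alpha>(i := \<alpha> i - r)"
  by (auto simp: unit_def fun_eq_iff)
lemma xsupp_unit: "xsupp (unit i n) = (if n = 0 then {} else {i})"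
  by (auto simp: unit_def xsupp_def)
lemma finite_xsupp_unit[simp]: "finite (xsupp (unit i n))"
  by (simp add: xsupp_unit)
lemma xdeg_unit[simp]: "xdeg (unit i n) = n"
  unfolding xdeg_def xsupp_unit by (auto simp: unit_def)
lemma xsupp_zero[simp]: "xsupp (\<lambda>_. 0) = {}"
  by (simp add: xsupp_def)
lemma unit_comp_swap: "unit k n \<circ> var_swap i j = unit (var_swap i j k) n"
  by (auto simp: unit_def fun_eq_iff var_swap_def)
lemma unit_inj: "n \<ge> 1 \<Longrightarrow> unit i n = unit j n \<Longrightarrow> i = j"
proof -
  assume n: "n \<ge> 1" and e: "unit i n = unit j n"
  have "unit i n i = unit j n i" using e by simp
  then show "i = j" using n by (auto simp: unit_def split: if_splits)
qed

lemma smono_mul_smono: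
  assumes f1: "finite (xsupp \<beta>1)" and f2: "finite (xsupp \<beta>2)" and fT1: "finite T1" and fT2: "finite T2"
    and dj: "T1 \<inter> T2 = {}"
  shows "sf_mul (smono \<beta>1 T1 c1) (smono \<beta>2 T2 c2) = smono (\<lambda>k. \<beta>1 k + \<beta>2 k) (T1 \<union> T2) (c1 * c2 * gsign T1 T2)"
proof (intro ext)
  fix \<alpha> S
  show "sf_mul (smono \<beta>1 T1 c1) (smono \<beta>2 T2 c2) \<alpha> S = smono (\<lambda>k. \<beta>1 k + \<beta>2 k) (T1 \<union> T2) (c1 * c2 * gsign T1 T2) \<alpha> S"
  proof (cases "\<alpha> = (\<lambda>k. \<beta>1 k + \<beta>2 k) \<and> S = T1 \<union> T2")
    case True
    have fa: "finite (xsupp \<alpha>)"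
    proof -
      have "xsupp \<alpha> \<subseteq> xsupp \<beta>1 \<union> xsupp \<beta>2" using True by (auto simp: xsupp_def)
      then show ?thesis using f1 f2 finite_subset by blast
    qed
    have "S - T1 = T2" using True dj by auto
    moreover have "(\<lambda>i. \<alpha> i - \<beta>1 i) = \<beta>2" using True by auto
    ultimately show ?thesis using True fa fT1 fT2
      unfolding sf_mul_smono_left by (simp add: smono_def)
  next
    case False
    have "\<not> ((\<forall>i. \<beta>1 i \<le> \<alpha> i) \<and> T1 \<subseteq> S \<and> (\<lambda>i. \<alpha> i - \<beta>1 i) = \<beta>2 \<and> S - T1 = T2)"
    proof
      assume a: "(\<forall>i. \<beta>1 i \<le> \<alpha> i) \<and> T1 \<subseteq> S \<and> (\<lambda>i. \<alpha> i - \<beta>1 i) = \<beta>2 \<and> S - T1 = T2"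
      have "\<alpha> x = \<beta>1 x + \<beta>2 x" for x
      proof -
        have "\<beta>1 x \<le> \<alpha> x" "\<alpha> x - \<beta>1 x = \<beta>2 x" using a by (auto simp: fun_eq_iff)
        then show ?thesis by simp
      qed
      then have "\<alpha> = (\<lambda>k. \<beta>1 k + \<beta>2 k)" by auto
      moreover have "S = T1 \<union> T2" using a by auto
      ultimately show False using False by simp
    qed
    then show ?thesis using False unfolding sf_mul_smono_left by (auto simp: smono_def)
  qed
qed

lemma sfsum_smono_fam:
  assumes inj: "\<And>i j. B i = B j \<Longrightarrow> G i = G j \<Longrightarrow> i = j"
  shows "sfsum (\<lambda>i. smono (B i) (G i) 1) = fam B G"
proof (intro ext)
  fix \<alpha> S
  show "sfsum (\<lambda>i. smono (B i) (G i) 1) \<alpha> S = fam B G \<alpha> S"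
  proof (cases "\<exists>i. \<alpha> = B i \<and> S = G i")
    case True
    then obtain i where i: "\<alpha> = B i" "S = G i" by blast
    have "sfsum (\<lambda>i. smono (B i) (G i) 1) \<alpha> S = (\<Sum>j\<in>{i}. smono (B j) (G j) 1 \<alpha> S)"
      by (rule sfsum_eq) (use i inj in \<open>auto simp: smono_def split: if_splits\<close>)
    then show ?thesis using i by (auto simp: smono_def fam_def)
  next
    case False
    have "sfsum (\<lambda>i. smono (B i) (G i) 1) \<alpha> S = (\<Sum>j\<in>{}. smono (B j) (G j) 1 \<alpha> S)"
      by (rule sfsum_eq) (use False in \<open>auto simp: smono_def split: if_splits\<close>)
    then show ?thesis using False by (simp add: fam_def)
  qed
qed

lemma psum_eq: "n \<ge> 1 \<Longrightarrow> psum n = fam (\<lambda>i. unit i n) (\<lambda>i. {})"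
  unfolding psum_def xpow_eq by (simp, rule sfsum_smono_fam) (metis One_nat_def unit_inj)

lemma psum_bar_eq: "psum_bar n = fam (\<lambda>i. unit i n) (\<lambda>i. {2*i})"
proof -
  have "sf_mul (phi i) (xpow i n) = smono (unit i n) {2*i} 1" for i
    unfolding phi_eq xpow_eq by (subst smono_mul_smono) (auto simp: insert_commute)
  then have eq: "(\<lambda>i. sf_mul (phi i) (xpow i n)) = (\<lambda>i. smono (unit i n) {2*i} 1)" by simp
  show ?thesis unfolding psum_bar_def eq by (rule sfsum_smono_fam) auto
qed

lemma psum_under_eq: "psum_under n = fam (\<lambda>i. unit i n) (\<lambda>i. {2*i+1})"
proof -
  have "sf_mul (theta i) (xpow i n) = smono (unit i n) {2*i+1} 1" for i
    unfolding theta_eq xpow_eq by (subst smono_mul_smono) (auto simp: insert_commute)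
  then have eq: "(\<lambda>i. sf_mul (theta i) (xpow i n)) = (\<lambda>i. smono (unit i n) {2*i+1} 1)" by simp
  show ?thesis unfolding psum_under_def eq by (rule sfsum_smono_fam) auto
qed

lemma gsign_single: "gsign {a} {b} = (if b < a then -1 else 1)"
proof -
  have "{(t, u). t \<in> {a} \<and> u \<in> {b} \<and> u < t} = (if b < a then {(a,b)} else {})" by auto
  then show ?thesis by (simp add: gsign_def)
qed

lemma psum_barunder_eq: "psum_barunder n = fam (\<lambda>i. unit i n) (\<lambda>i. {2*i, 2*i+1})"
proof -
  have "sf_mul (sf_mul (phi i) (theta i)) (xpow i n) = smono (unit i n) {2*i, 2*i+1} 1" for i
  proof -
    have "sf_mul (phi i) (theta i) = smono (\<lambda>_. 0) {2*i, 2*i+1} 1"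
      unfolding phi_eq theta_eq by (subst smono_mul_smono) (auto simp: gsign_single insert_commute)
    note pt = this
    have "sf_mul (smono (\<lambda>_. 0) {2*i, 2*i+1} 1) (smono (unit i n) {} 1) = smono (unit i n) {2*i, 2*i+1} 1"
      by (subst smono_mul_smono) auto
    then show ?thesis unfolding xpow_eq pt .
  qed
  then have eq: "(\<lambda>i. sf_mul (sf_mul (phi i) (theta i)) (xpow i n)) = (\<lambda>i. smono (unit i n) {2*i, 2*i+1} 1)" by simp
  show ?thesis unfolding psum_barunder_def eq by (rule sfsum_smono_fam) auto
qed

lemma fam_PSinf:
  assumes fG: "\<And>k. finite (G k)" and cG: "\<And>k. card (G k) \<le> 2"
    and sw: "\<And>i j k. G (var_swap i j k) = gvar_swap i j ` G k"
    and ps: "\<And>i j k. perm_gsign (gvar_swap i j) (G k) = 1"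
  shows "fam (\<lambda>k. unit k n) G \<in> PSinf"
proof -
  let ?f = "fam (\<lambda>k. unit k n) G"
  have A: "?f \<alpha> S \<noteq> 0 \<Longrightarrow> finite (xsupp \<alpha>) \<and> finite S" for \<alpha> S
    using fG by (auto simp: fam_def split: if_splits)
  have B: "?f \<alpha> S \<noteq> 0 \<Longrightarrow> xdeg \<alpha> + card S \<le> n + 2" for \<alpha> S
    using cG by (auto simp: fam_def split: if_splits)
  have C: "?f (\<alpha> \<circ> var_swap i j) (gvar_swap i j ` S) = perm_gsign (gvar_swap i j) S * ?f \<alpha> S" for i j \<alpha> S
  proof -
    let ?s = "var_swap i j" and ?\<sigma> = "gvar_swap i j"
    have "(\<exists>k. \<alpha> \<circ> ?s = unit k n \<and> ?\<sigma> ` S = G k) \<longleftrightarrow> (\<exists>k. \<alpha> = unit k n \<and> S = G k)"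
    proof
      assume "\<exists>k. \<alpha> \<circ> ?s = unit k n \<and> ?\<sigma> ` S = G k"
      then obtain k where k: "\<alpha> \<circ> ?s = unit k n" "?\<sigma> ` S = G k" by blast
      have "\<alpha> = (\<alpha> \<circ> ?s) \<circ> ?s" by (simp add: fun_eq_iff)
      also have "\<dots> = unit (?s k) n" using k(1) unit_comp_swap by simp
      finally have 1: "\<alpha> = unit (?s k) n" .
      have "S = ?\<sigma> ` (?\<sigma> ` S)" by (simp add: image_image)
      also have "\<dots> = G (?s k)" using k(2) sw by simp
      finally show "\<exists>k. \<alpha> = unit k n \<and> S = G k" using 1 by blast
    next
      assume "\<exists>k. \<alpha> = unit k n \<and> S = G k"
      then obtain k where k: "\<alpha> = unit k n" "S = G k" by blast
      have "\<alpha> \<circ> ?s = unit (?s k) n" using k unit_comp_swap by simp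
      moreover have "?\<sigma> ` S = G (?s k)" using k sw by simp
      ultimately show "\<exists>k. \<alpha> \<circ> ?s = unit k n \<and> ?\<sigma> ` S = G k" by blast
    qed
    then show ?thesis using ps by (auto simp: fam_def)
  qed
  show ?thesis unfolding PSinf_iff using A B C by blast
qed

lemma gvar_even[simp]: "gvar_swap i j (2*k) = 2 * var_swap i j k"
  by (simp add: gvar_swap_def)
lemma gvar_odd[simp]: "gvar_swap i j (Suc (2*k)) = Suc (2 * var_swap i j k)"
  by (simp add: gvar_swap_def)

lemma perm_gsign_single: "perm_gsign \<sigma> {a} = 1"
proof -
  have "{(x, y). x \<in> {a} \<and> y \<in> {a} \<and> x < y \<and> \<sigma> y < \<sigma> x} = {}" by auto
  then show ?thesis unfolding perm_gsign_def by (simp only:) simp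
qed

lemma perm_gsign_pair: "perm_gsign (gvar_swap i j) {2*k, 2*k+1} = 1"
proof -
  have "{(a, b). a \<in> {2*k, 2*k+1} \<and> b \<in> {2*k, 2*k+1} \<and> a < b \<and> gvar_swap i j b < gvar_swap i j a} = {}"
    by auto
  then show ?thesis unfolding perm_gsign_def by (simp only:) simp
qed

lemma psum_PSinf: "psum n \<in> PSinf"
proof (cases "n = 0")
  case True then show ?thesis by (simp add: psum_def sf_zero_eq PSinf_zero)
next
  case False
  then have "psum n = fam (\<lambda>i. unit i n) (\<lambda>i. {})" using psum_eq by simp
  then show ?thesis by simp (rule fam_PSinf, auto)
qed

lemma psum_bar_PSinf: "psum_bar n \<in> PSinf"
  unfolding psum_bar_eq
  by (intro fam_PSinf) (auto simp: perm_gsign_single)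

lemma psum_under_PSinf: "psum_under n \<in> PSinf"
  unfolding psum_under_eq
  by (intro fam_PSinf) (auto simp: perm_gsign_single)

lemma psum_barunder_PSinf: "psum_barunder n \<in> PSinf"
  unfolding psum_barunder_eq
  by (intro fam_PSinf) (auto simp: perm_gsign_pair[simplified] card_insert_if)


definition even_sf :: "sf \<Rightarrow> bool" where
  "even_sf f \<longleftrightarrow> (\<forall>\<alpha> S. S \<noteq> {} \<longrightarrow> f \<alpha> S = 0)"

lemma even_esym: "even_sf (esym n)" by (simp add: even_sf_def esym_def)
lemma even_hsym: "even_sf (hsym n)" by (simp add: even_sf_def hsym_def)
lemma even_dx: "even_sf f \<Longrightarrow> even_sf (dx i f)" by (simp add: even_sf_def dx_def)

definition sj :: "nat \<Rightarrow> nat \<Rightarrow> rat" where "sj i j = gsign {2*i} {2*j+1}"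

lemma sj_eq: "sj i j = (if j < i then -1 else 1)"
  unfolding sj_def gsign_single by auto

lemma odd_ne_even[simp]: "Suc (2*j) \<noteq> 2*i" "2*i \<noteq> Suc (2*j)" by presburger+

lemma even_nz: "even_sf g \<Longrightarrow> g \<alpha> T \<noteq> 0 \<Longrightarrow> T = {}"
  by (auto simp: even_sf_def)

lemma sj_same[simp]: "sj i i = 1" by (simp add: sj_eq)

lemma mul_psum_at:
  assumes n: "n \<ge> 1" and fa: "finite (xsupp \<alpha>)"
  shows "sf_mul (psum n) g \<alpha> {} = (\<Sum>k\<in>xsupp \<alpha>. if n \<le> \<alpha> k then g (\<alpha>(k := \<alpha> k - n)) {} else 0)"
proof -
  have I: "{k. (\<forall>m. unit k n m \<le> \<alpha> m) \<and> ({}::nat set) \<subseteq> {}} = {k. n \<le> \<alpha> k}"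
    by (auto simp: unit_le_iff)
  have sub: "{k. n \<le> \<alpha> k} \<subseteq> xsupp \<alpha>" using n by (auto simp: xsupp_def)
  have fI: "finite {k. n \<le> \<alpha> k}" using finite_subset[OF sub fa] .
  have "sf_mul (psum n) g \<alpha> {} = (\<Sum>k\<in>{k. n \<le> \<alpha> k}. gsign {} ({} - {}) * g (\<lambda>m. \<alpha> m - unit k n m) ({} - {}))"
  proof -
    have inj: "\<And>i j. unit i n = unit j n \<Longrightarrow> (\<lambda>k. {}::nat set) i = (\<lambda>k. {}) j \<Longrightarrow> i = j" using unit_inj[OF n] by blast
    have fI': "finite {k. (\<forall>m. unit k n m \<le> \<alpha> m) \<and> ({}::nat set) \<subseteq> {}}" using fI I by simp
    show ?thesis unfolding psum_eq[OF n] using sf_mul_fam[OF inj fa finite.emptyI fI', of g] I by simp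
  qed
  also have "\<dots> = (\<Sum>k\<in>{k. n \<le> \<alpha> k}. g (\<alpha>(k := \<alpha> k - n)) {})"
    by (simp add: unit_minus)
  also have "\<dots> = (\<Sum>k\<in>xsupp \<alpha>. if n \<le> \<alpha> k then g (\<alpha>(k := \<alpha> k - n)) {} else 0)"
    using fa sub by (simp add: sum.If_cases Int_absorb1 Collect_mono inf.absorb2)
  finally show ?thesis .
qed

lemma mul_psum_zero:
  assumes n: "n \<ge> 1" and g: "even_sf g" and S: "S \<noteq> {}"
  shows "sf_mul (psum n) g \<alpha> S = 0"
proof (rule ccontr)
  assume "sf_mul (psum n) g \<alpha> S \<noteq> 0"
  then obtain k where "g (\<lambda>m. \<alpha> m - unit k n m) (S - {}) \<noteq> 0"
    unfolding psum_eq[OF n] by (blast dest: sf_mul_fam_nz)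
  then show False using g S by (simp add: even_sf_def)
qed

lemma mul_fam_single:
  assumes inj: "\<And>i j. G i = G j \<Longrightarrow> i = j"
    and sub: "\<And>k. (\<forall>m. unit k r m \<le> \<alpha> m) \<Longrightarrow> G k \<subseteq> S \<Longrightarrow> k = i"
    and fG: "finite S"
  shows "sf_mul (fam (\<lambda>k. unit k r) G) g \<alpha> S =
     (if finite (xsupp \<alpha>) \<and> r \<le> \<alpha> i \<and> G i \<subseteq> S then gsign (G i) (S - G i) * g (\<alpha>(i := \<alpha> i - r)) (S - G i) else 0)"
proof (cases "finite (xsupp \<alpha>)")
  case False then show ?thesis using sf_mul_infin by simp
next
  case True
  let ?I = "{k. (\<forall>m. unit k r m \<le> \<alpha> m) \<and> G k \<subseteq> S}"
  have I: "?I = (if r \<le> \<alpha> i \<and> G i \<subseteq> S then {i} else {})"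
    using sub by (auto simp: unit_le_iff)
  have "sf_mul (fam (\<lambda>k. unit k r) G) g \<alpha> S = (\<Sum>k\<in>?I. gsign (G k) (S - G k) * g (\<lambda>m. \<alpha> m - unit k r m) (S - G k))"
    by (rule sf_mul_fam) (use inj True fG I in auto)
  then show ?thesis using True by (simp add: I unit_minus)
qed

lemma mul_bar_at:
  "sf_mul (psum_bar r) g \<alpha> {2*i} = (if finite (xsupp \<alpha>) \<and> r \<le> \<alpha> i then g (\<alpha>(i := \<alpha> i - r)) {} else 0)"
  unfolding psum_bar_eq by (subst mul_fam_single[where i=i]) auto

lemma mul_under_at:
  "sf_mul (psum_under r) g \<alpha> {2*i+1} = (if finite (xsupp \<alpha>) \<and> r \<le> \<alpha> i then g (\<alpha>(i := \<alpha> i - r)) {} else 0)"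
  unfolding psum_under_eq by (subst mul_fam_single[where i=i]) auto

lemma mul_bar_at2:
  "sf_mul (psum_bar r) g \<alpha> {2*i, 2*j+1} = (if finite (xsupp \<alpha>) \<and> r \<le> \<alpha> i then sj i j * g (\<alpha>(i := \<alpha> i - r)) {2*j+1} else 0)"
proof -
  have d: "{2*i, 2*j+1} - {2*i} = {2*j+1}" by auto
  show ?thesis unfolding psum_bar_eq
    by (subst mul_fam_single[where i=i]) (auto simp: d sj_def)
qed

lemma mul_barunder_at:
  "sf_mul (psum_barunder r) g \<alpha> {2*i, 2*j+1} = (if finite (xsupp \<alpha>) \<and> i = j \<and> r \<le> \<alpha> i then g (\<alpha>(i := \<alpha> i - r)) {} else 0)"
proof (cases "i = j")
  case True
  show ?thesis unfolding psum_barunder_eq True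
    by (subst mul_fam_single[where i=j]) auto
next
  case False
  have "sf_mul (fam (\<lambda>k. unit k r) (\<lambda>k. {2*k, 2*k+1})) g \<alpha> {2*i, 2*j+1} = 0"
  proof (rule ccontr)
    assume "sf_mul (fam (\<lambda>k. unit k r) (\<lambda>k. {2*k, 2*k+1})) g \<alpha> {2*i, 2*j+1} \<noteq> 0"
    then obtain k where "{2*k, 2*k+1} \<subseteq> {2*i, 2*j+1}" by (blast dest: sf_mul_fam_nz)
    then have "k = i" "k = j" by auto
    then show False using False by simp
  qed
  then show ?thesis unfolding psum_barunder_eq using False by simp
qed

lemma mul_bar_zero:
  assumes g: "even_sf g" and S: "\<And>k. S \<noteq> {2*k}"
  shows "sf_mul (psum_bar r) g \<alpha> S = 0"
proof (rule ccontr)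
  assume "sf_mul (psum_bar r) g \<alpha> S \<noteq> 0"
  then obtain k where k: "{2*k} \<subseteq> S" "g (\<lambda>m. \<alpha> m - unit k r m) (S - {2*k}) \<noteq> 0"
    unfolding psum_bar_eq by (blast dest: sf_mul_fam_nz)
  then have "S - {2*k} = {}" using g by (blast dest: even_nz)
  then have "S = {2*k}" using k by auto
  then show False using S by blast
qed

lemma mul_under_zero:
  assumes g: "even_sf g" and S: "\<And>k. S \<noteq> {2*k+1}"
  shows "sf_mul (psum_under r) g \<alpha> S = 0"
proof (rule ccontr)
  assume "sf_mul (psum_under r) g \<alpha> S \<noteq> 0"
  then obtain k where k: "{2*k+1} \<subseteq> S" "g (\<lambda>m. \<alpha> m - unit k r m) (S - {2*k+1}) \<noteq> 0"
    unfolding psum_under_eq by (blast dest: sf_mul_fam_nz)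
  then have "S - {2*k+1} = {}" using g by (blast dest: even_nz)
  then have "S = {2*k+1}" using k by auto
  then show False using S by blast
qed

lemma mul_bar_under_zero:
  assumes g: "even_sf g" and S: "\<And>i j. S \<noteq> {2*i, 2*j+1}"
  shows "sf_mul (psum_bar a) (sf_mul (psum_under b) g) \<alpha> S = 0"
proof (rule ccontr)
  assume "sf_mul (psum_bar a) (sf_mul (psum_under b) g) \<alpha> S \<noteq> 0"
  then obtain k where k: "{2*k} \<subseteq> S" "sf_mul (psum_under b) g (\<lambda>m. \<alpha> m - unit k a m) (S - {2*k}) \<noteq> 0"
    unfolding psum_bar_eq by (blast dest: sf_mul_fam_nz)
  then obtain l where l: "{2*l+1} \<subseteq> S - {2*k}" "g (\<lambda>m. (\<lambda>m. \<alpha> m - unit k a m) m - unit l b m) (S - {2*k} - {2*l+1}) \<noteq> 0"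
    unfolding psum_under_eq by (blast dest: sf_mul_fam_nz)
  then have "S - {2*k} - {2*l+1} = {}" using g by (blast dest: even_nz)
  then have "S = {2*k, 2*l+1}" using k l by auto
  then show False using S by blast
qed

lemma mul_barunder_zero:
  assumes g: "even_sf g" and S: "\<And>i j. S \<noteq> {2*i, 2*j+1}"
  shows "sf_mul (psum_barunder m) g \<alpha> S = 0"
proof (rule ccontr)
  assume "sf_mul (psum_barunder m) g \<alpha> S \<noteq> 0"
  then obtain k where k: "{2*k, 2*k+1} \<subseteq> S" "g (\<lambda>x. \<alpha> x - unit k m x) (S - {2*k, 2*k+1}) \<noteq> 0"
    unfolding psum_barunder_eq by (blast dest: sf_mul_fam_nz)
  then have "S - {2*k, 2*k+1} = {}" using g by (blast dest: even_nz)
  then have "S = {2*k, 2*k+1}" using k by auto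
  then show False using S by blast
qed


lemma phi_mul_at:
  "sf_mul (phi i) g \<alpha> S = (if finite (xsupp \<alpha>) \<and> finite S \<and> 2*i \<in> S then gsign {2*i} (S - {2*i}) * g \<alpha> (S - {2*i}) else 0)"
  unfolding phi_eq sf_mul_smono_left by simp

lemma theta_mul_at:
  "sf_mul (theta i) g \<alpha> S = (if finite (xsupp \<alpha>) \<and> finite S \<and> 2*i+1 \<in> S then gsign {2*i+1} (S - {2*i+1}) * g \<alpha> (S - {2*i+1}) else 0)"
  unfolding theta_eq sf_mul_smono_left by simp

lemma phi_theta: "sf_mul (phi i) (theta j) = smono (\<lambda>_. 0) {2*i, 2*j+1} (sj i j)"
  unfolding phi_eq theta_eq sj_def by (subst smono_mul_smono) (auto simp: insert_commute)

lemma phitheta_mul_at: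
  "sf_mul (sf_mul (phi i) (theta j)) g \<alpha> S = (if finite (xsupp \<alpha>) \<and> finite S \<and> {2*i, 2*j+1} \<subseteq> S
      then sj i j * gsign {2*i, 2*j+1} (S - {2*i, 2*j+1}) * g \<alpha> (S - {2*i, 2*j+1}) else 0)"
  unfolding phi_theta sf_mul_smono_left by simp

lemma bar_of_at:
  assumes ev: "even_sf (f (n+1))"
  shows "bar_of f n \<alpha> {2*k} = (if finite (xsupp \<alpha>) then dx k (f (n+1)) \<alpha> {} else 0)"
proof -
  have "bar_of f n \<alpha> {2*k} = (\<Sum>i\<in>{k}. sf_mul (phi i) (dx i (f (n + 1))) \<alpha> {2*k})"
    unfolding bar_of_def by (rule sfsum_eq) (auto simp: phi_mul_at split: if_splits)
  then show ?thesis by (simp add: phi_mul_at)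
qed

lemma bar_of_zero:
  assumes ev: "even_sf (f (n+1))" and S: "\<And>k. S \<noteq> {2*k}"
  shows "bar_of f n \<alpha> S = 0"
proof -
  have "bar_of f n \<alpha> S = (\<Sum>i\<in>{}. sf_mul (phi i) (dx i (f (n + 1))) \<alpha> S)"
    unfolding bar_of_def
  proof (rule sfsum_eq)
    show "{i. sf_mul (phi i) (dx i (f (n + 1))) \<alpha> S \<noteq> 0} \<subseteq> {}"
    proof
      fix i assume "i \<in> {i. sf_mul (phi i) (dx i (f (n + 1))) \<alpha> S \<noteq> 0}"
      then have a: "2*i \<in> S" "dx i (f (n + 1)) \<alpha> (S - {2*i}) \<noteq> 0" by (auto simp: phi_mul_at split: if_splits)
      then have "S - {2*i} = {}" using even_dx[OF ev] by (blast dest: even_nz)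
      then have "S = {2*i}" using a by auto
      then show "i \<in> {}" using S by blast
    qed
  qed simp
  then show ?thesis by simp
qed

lemma under_of_at:
  assumes ev: "even_sf (f (n+1))"
  shows "under_of f n \<alpha> {2*k+1} = (if finite (xsupp \<alpha>) then dx k (f (n+1)) \<alpha> {} else 0)"
proof -
  have "under_of f n \<alpha> {2*k+1} = (\<Sum>i\<in>{k}. sf_mul (theta i) (dx i (f (n + 1))) \<alpha> {2*k+1})"
    unfolding under_of_def by (rule sfsum_eq) (auto simp: theta_mul_at split: if_splits)
  then show ?thesis by (simp add: theta_mul_at)
qed

lemma under_of_zero:
  assumes ev: "even_sf (f (n+1))" and S: "\<And>k. S \<noteq> {2*k+1}"
  shows "under_of f n \<alpha> S = 0"
proof -
  have "under_of f n \<alpha> S = (\<Sum>i\<in>{}. sf_mul (theta i) (dx i (f (n + 1))) \<alpha> S)"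
    unfolding under_of_def
  proof (rule sfsum_eq)
    show "{i. sf_mul (theta i) (dx i (f (n + 1))) \<alpha> S \<noteq> 0} \<subseteq> {}"
    proof
      fix i assume "i \<in> {i. sf_mul (theta i) (dx i (f (n + 1))) \<alpha> S \<noteq> 0}"
      then have a: "2*i+1 \<in> S" "dx i (f (n + 1)) \<alpha> (S - {2*i+1}) \<noteq> 0" by (auto simp: theta_mul_at split: if_splits)
      then have "S - {2*i+1} = {}" using even_dx[OF ev] by (blast dest: even_nz)
      then have "S = {2*i+1}" using a by auto
      then show "i \<in> {}" using S by blast
    qed
  qed simp
  then show ?thesis by simp
qed

lemma barunder_of_at:
  assumes ev: "even_sf (f (n+2))"
  shows "barunder_of f n \<alpha> {2*i, 2*j+1} = (if finite (xsupp \<alpha>) then sj i j * dx i (dx j (f (n+2))) \<alpha> {} else 0)"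
proof -
  let ?F = "\<lambda>(i, j). sf_mul (sf_mul (phi i) (theta j)) (dx i (dx j (f (n + 2))))"
  have "barunder_of f n \<alpha> {2*i, 2*j+1} = (\<Sum>p\<in>{(i,j)}. ?F p \<alpha> {2*i, 2*j+1})"
    unfolding barunder_of_def
  proof (rule sfsum_eq)
    show "{p. ?F p \<alpha> {2*i, 2*j+1} \<noteq> 0} \<subseteq> {(i,j)}"
    proof
      fix p assume "p \<in> {p. ?F p \<alpha> {2*i, 2*j+1} \<noteq> 0}"
      then obtain a b where p: "p = (a, b)" and "{2*a, 2*b+1} \<subseteq> {2*i, 2*j+1}"
        by (cases p) (auto simp: phitheta_mul_at split: if_splits)
      then have "a = i" "b = j" by auto
      then show "p \<in> {(i,j)}" using p by simp
    qed
  qed simp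
  then show ?thesis by (simp add: phitheta_mul_at)
qed

lemma barunder_of_zero:
  assumes ev: "even_sf (f (n+2))" and S: "\<And>i j. S \<noteq> {2*i, 2*j+1}"
  shows "barunder_of f n \<alpha> S = 0"
proof -
  let ?F = "\<lambda>(i, j). sf_mul (sf_mul (phi i) (theta j)) (dx i (dx j (f (n + 2))))"
  have "barunder_of f n \<alpha> S = (\<Sum>p\<in>{}. ?F p \<alpha> S)"
    unfolding barunder_of_def
  proof (rule sfsum_eq)
    show "{p. ?F p \<alpha> S \<noteq> 0} \<subseteq> {}"
    proof
      fix p assume "p \<in> {p. ?F p \<alpha> S \<noteq> 0}"
      then obtain a b where p: "p = (a, b)" and a: "{2*a, 2*b+1} \<subseteq> S"
         and nz: "dx a (dx b (f (n + 2))) \<alpha> (S - {2*a, 2*b+1}) \<noteq> 0"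
        by (cases p) (auto simp: phitheta_mul_at split: if_splits)
      then have "S - {2*a, 2*b+1} = {}" using even_dx[OF even_dx[OF ev]] by (blast dest: even_nz)
      then have "S = {2*a, 2*b+1}" using a by auto
      then show "p \<in> {}" using S by blast
    qed
  qed simp
  then show ?thesis by simp
qed


lemma sum_at: "(sum F A) \<alpha> S = (\<Sum>x\<in>A. F x \<alpha> S)"
  by (induction A rule: infinite_finite_induct) auto

lemma smul_at[simp]: "sf_smul c f \<alpha> S = c * f \<alpha> S" by (simp add: sf_smul_def)
lemma plus_at[simp]: "(f + g) \<alpha> S = f \<alpha> S + (g \<alpha> S :: rat)" by simp
lemma minus_at[simp]: "(f - g) \<alpha> S = f \<alpha> S - (g \<alpha> S :: rat)" by simp

lemma esym_empty: "esym m \<alpha> {} = Ej {} m \<alpha>" by (simp add: esym_eq)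
lemma hsym_empty: "hsym m \<alpha> {} = Hh m \<alpha>" by (simp add: hsym_eq)

lemma alt_shift:
  fixes X :: "nat \<Rightarrow> rat"
  shows "(\<Sum>r\<in>{1..n}. (-1)^(r-1) * X r) = X 0 - (\<Sum>r\<le>n. (-1)^r * X r)"
proof -
  have "{..n} = insert 0 {1..n}" by auto
  then have "(\<Sum>r\<le>n. (-1)^r * X r) = X 0 + (\<Sum>r\<in>{1..n}. (-1)^r * X r)" by simp
  moreover have "(\<Sum>r\<in>{1..n}. (-1)^r * X r) = - (\<Sum>r\<in>{1..n}. (-1)^(r-1) * X r)"
  proof -
    have "(\<Sum>r\<in>{1..n}. (-1)^r * X r) = (\<Sum>r\<in>{1..n}. - ((-1)^(r-1) * X r))"
    proof (rule sum.cong[OF refl])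
      fix r assume "r \<in> {1..n}"
      then obtain r' where "r = Suc r'" by (cases r) auto
      then show "(-1)^r * X r = - ((-1)^(r-1) * X r)" by simp
    qed
    then show ?thesis by (simp add: sum_negf)
  qed
  ultimately show ?thesis by simp
qed

lemma dx_Ej:
  assumes kJ: "k \<notin> J" and fa: "finite (xsupp \<alpha>)"
  shows "of_nat (\<alpha> k + 1) * Ej J (m+1) (\<alpha>(k := \<alpha> k + 1)) = Ej (insert k J) m \<alpha>"
proof (cases "\<alpha> k = 0")
  case True
  have k: "k \<notin> xsupp \<alpha>" using True by (simp add: xsupp_def)
  have c: "card (xsupp (\<alpha>(k := 1))) = card (xsupp \<alpha>) + 1"
    using k fa by (simp add: xsupp_upd)
  have e1: "(\<forall>l. (\<alpha>(k := 1)) l \<le> 1) = (\<forall>l. \<alpha> l \<le> 1)"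
  proof
    assume H: "\<forall>l. (\<alpha>(k := 1)) l \<le> 1"
    show "\<forall>l. \<alpha> l \<le> 1"
    proof
      fix l show "\<alpha> l \<le> 1"
      proof (cases "l = k")
        case True then show ?thesis using \<open>\<alpha> k = 0\<close> by simp
      next
        case False then show ?thesis using H[rule_format, of l] by simp
      qed
    qed
  qed simp
  have e2: "(\<forall>j\<in>J. (\<alpha>(k := 1)) j = 0) = (\<forall>j\<in>J. \<alpha> j = 0)" using kJ by auto
  have a1: "\<alpha>(k := \<alpha> k + 1) = \<alpha>(k := 1)" using True by simp
  have "Ej J (m+1) (\<alpha>(k := 1)) = Ej (insert k J) m \<alpha>"
    unfolding Ej_def finite_xsupp_upd e1 e2 c using True by simp
  then show ?thesis using True a1 by simp
next
  case False
  have "\<not> (\<forall>l. (\<alpha>(k := \<alpha> k + 1)) l \<le> 1)"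
  proof
    assume "\<forall>l. (\<alpha>(k := \<alpha> k + 1)) l \<le> 1"
    then have "\<alpha> k + 1 \<le> 1" by (metis fun_upd_same)
    then show False using False by simp
  qed
  then show ?thesis using False unfolding Ej_def by simp
qed

lemma Hh_upd:
  assumes fa: "finite (xsupp \<alpha>)" and r: "r \<le> \<alpha> i" "r \<le> m"
  shows "Hh (m - r) (\<alpha>(i := \<alpha> i - r)) = Hh m \<alpha>"
proof -
  have "xdeg (\<alpha>(i := \<alpha> i - r)) + \<alpha> i = xdeg \<alpha> + (\<alpha> i - r)" by (rule xdeg_upd[OF fa])
  then have "xdeg (\<alpha>(i := \<alpha> i - r)) = xdeg \<alpha> - r" using r by simp
  moreover have "\<alpha> i \<le> xdeg \<alpha>" by (rule le_xdeg[OF fa])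
  ultimately show ?thesis using r fa by (auto simp: Hh_def)
qed

lemma dx_Hh:
  assumes fa: "finite (xsupp \<alpha>)"
  shows "Hh (m+1) (\<alpha>(k := \<alpha> k + 1)) = Hh m \<alpha>"
proof -
  have "xdeg (\<alpha>(k := \<alpha> k + 1)) + \<alpha> k = xdeg \<alpha> + (\<alpha> k + 1)" by (rule xdeg_upd[OF fa])
  then have "xdeg (\<alpha>(k := \<alpha> k + 1)) = xdeg \<alpha> + 1" by simp
  then show ?thesis using fa by (simp add: Hh_def)
qed

lemma card_xsupp_Ej: "Ej J m \<alpha> \<noteq> 0 \<Longrightarrow> card (xsupp \<alpha>) = m"
  by (simp add: Ej_def split: if_splits)

lemma N0:
  assumes n: "n \<ge> 1"
  shows "sf_smul (of_nat n) (esym n) = (\<Sum>r\<in>{1..n}. sf_smul ((-1)^(r-1)) (sf_mul (psum r) (esym (n-r))))"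
proof (intro ext)
  fix \<alpha> S
  show "sf_smul (of_nat n) (esym n) \<alpha> S = (\<Sum>r\<in>{1..n}. sf_smul ((-1)^(r-1)) (sf_mul (psum r) (esym (n-r)))) \<alpha> S"
  proof (cases "finite (xsupp \<alpha>) \<and> S = {}")
    case False
    then have "esym n \<alpha> S = 0" by (auto simp: esym_def)
    moreover have "sf_mul (psum r) (esym (n-r)) \<alpha> S = 0" if "r \<in> {1..n}" for r
    proof (cases "finite (xsupp \<alpha>)")
      case True
      then have "S \<noteq> {}" using False by simp
      then show ?thesis using that by (intro mul_psum_zero even_esym) auto
    next
      case False then show ?thesis using sf_mul_infin by simp
    qed
    ultimately show ?thesis by (simp add: sum_at)
  next
    case True
    then have fa: "finite (xsupp \<alpha>)" and S: "S = {}" by auto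
    let ?X = "\<lambda>k r. if r \<le> \<alpha> k then Ej {} (n - r) (\<alpha>(k := \<alpha> k - r)) else 0"
    have "(\<Sum>r\<in>{1..n}. sf_smul ((-1)^(r-1)) (sf_mul (psum r) (esym (n-r)))) \<alpha> S
        = (\<Sum>r\<in>{1..n}. (-1)^(r-1) * (\<Sum>k\<in>xsupp \<alpha>. ?X k r))"
      unfolding sum_at S by (intro sum.cong refl) (simp add: mul_psum_at fa esym_empty cong: if_cong)
    also have "\<dots> = (\<Sum>k\<in>xsupp \<alpha>. \<Sum>r\<in>{1..n}. (-1)^(r-1) * ?X k r)"
      by (simp only: sum_distrib_left) (rule sum.swap)
    also have "\<dots> = (\<Sum>k\<in>xsupp \<alpha>. Ej {} n \<alpha>)"
    proof (rule sum.cong[OF refl])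
      fix k assume k: "k \<in> xsupp \<alpha>"
      have "(\<Sum>r\<in>{1..n}. (-1)^(r-1) * ?X k r) = ?X k 0 - (\<Sum>r\<le>n. (-1)^r * ?X k r)"
        by (rule alt_shift)
      also have "(\<Sum>r\<le>n. (-1)^r * ?X k r) = Ej {k} n \<alpha>"
        using KL[of k "{}" \<alpha> n] fa by simp
      also have "Ej {k} n \<alpha> = 0" using k by (simp add: Ej_def xsupp_def)
      finally show "(\<Sum>r\<in>{1..n}. (-1)^(r-1) * ?X k r) = Ej {} n \<alpha>" by simp
    qed
    also have "\<dots> = of_nat n * Ej {} n \<alpha>"
      using card_xsupp_Ej[of "{}" n \<alpha>] by (cases "Ej {} n \<alpha> = 0") auto
    finally show ?thesis using S by (simp add: esym_eq)
  qed
qed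

lemma H0:
  assumes n: "n \<ge> 1"
  shows "sf_smul (of_nat n) (hsym n) = (\<Sum>r\<in>{1..n}. sf_mul (psum r) (hsym (n-r)))"
proof (intro ext)
  fix \<alpha> S
  show "sf_smul (of_nat n) (hsym n) \<alpha> S = (\<Sum>r\<in>{1..n}. sf_mul (psum r) (hsym (n-r))) \<alpha> S"
  proof (cases "finite (xsupp \<alpha>) \<and> S = {}")
    case False
    then have "hsym n \<alpha> S = 0" by (auto simp: hsym_def)
    moreover have "sf_mul (psum r) (hsym (n-r)) \<alpha> S = 0" if "r \<in> {1..n}" for r
    proof (cases "finite (xsupp \<alpha>)")
      case True
      then have "S \<noteq> {}" using False by simp
      then show ?thesis using that by (intro mul_psum_zero even_hsym) auto
    next
      case False then show ?thesis using sf_mul_infin by simp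
    qed
    ultimately show ?thesis by (simp add: sum_at)
  next
    case True
    then have fa: "finite (xsupp \<alpha>)" and S: "S = {}" by auto
    let ?X = "\<lambda>k r. if r \<le> \<alpha> k then Hh (n - r) (\<alpha>(k := \<alpha> k - r)) else 0"
    have "(\<Sum>r\<in>{1..n}. sf_mul (psum r) (hsym (n-r))) \<alpha> S
        = (\<Sum>r\<in>{1..n}. (\<Sum>k\<in>xsupp \<alpha>. ?X k r))"
      unfolding sum_at S by (intro sum.cong refl) (simp add: mul_psum_at fa hsym_empty cong: if_cong)
    also have "\<dots> = (\<Sum>k\<in>xsupp \<alpha>. \<Sum>r\<in>{1..n}. ?X k r)"
      by (rule sum.swap)
    also have "\<dots> = (\<Sum>k\<in>xsupp \<alpha>. of_nat (\<alpha> k) * Hh n \<alpha>)"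
    proof (rule sum.cong[OF refl])
      fix k assume k: "k \<in> xsupp \<alpha>"
      have "{..n} = insert 0 {1..n}" by auto
      then have "(\<Sum>r\<le>n. ?X k r) = ?X k 0 + (\<Sum>r\<in>{1..n}. ?X k r)" by simp
      moreover have "(\<Sum>r\<le>n. ?X k r) = of_nat (\<alpha> k + 1) * Hh n \<alpha>" using HL[OF fa] .
      ultimately show "(\<Sum>r\<in>{1..n}. ?X k r) = of_nat (\<alpha> k) * Hh n \<alpha>" by (simp add: algebra_simps)
    qed
    also have "\<dots> = of_nat (xdeg \<alpha>) * Hh n \<alpha>"
      by (simp add: xdeg_def sum_distrib_right)
    also have "\<dots> = of_nat n * Hh n \<alpha>" by (simp add: Hh_def)
    finally show ?thesis using S by (simp add: hsym_eq)
  qed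
qed

lemma dx_at: "dx i f \<alpha> S = of_nat (\<alpha> i + 1) * f (\<alpha>(i := \<alpha> i + 1)) S"
  by (simp add: dx_def)

lemma dx_esym_at:
  assumes fa: "finite (xsupp \<alpha>)" and kJ: "k \<notin> J"
  shows "of_nat (\<alpha> k + 1) * Ej J (n+1) (\<alpha>(k := \<alpha> k + 1)) = Ej (insert k J) n \<alpha>"
  by (rule dx_Ej[OF kJ fa])

lemma mul_under_at_Suc:
  "sf_mul (psum_under r) g \<alpha> {Suc (2*i)} = (if finite (xsupp \<alpha>) \<and> r \<le> \<alpha> i then g (\<alpha>(i := \<alpha> i - r)) {} else 0)"
  using mul_under_at[of r g \<alpha> i] by simp

lemma EB: "bar_of esym n = (\<Sum>r\<le>n. sf_smul ((-1)^r) (sf_mul (psum_bar r) (esym (n-r))))"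
proof (intro ext)
  fix \<alpha> S
  show "bar_of esym n \<alpha> S = (\<Sum>r\<le>n. sf_smul ((-1)^r) (sf_mul (psum_bar r) (esym (n-r)))) \<alpha> S"
  proof (cases "\<exists>k. S = {2*k}")
    case True
    then obtain k where S: "S = {2*k}" by blast
    show ?thesis
    proof (cases "finite (xsupp \<alpha>)")
      case fa: True
      have "bar_of esym n \<alpha> S = Ej {k} n \<alpha>"
        unfolding S bar_of_at[OF even_esym] using fa dx_Ej[of k "{}" \<alpha> n]
        by (simp add: dx_at esym_empty)
      also have "\<dots> = (\<Sum>r\<le>n. (-1)^r * (if r \<le> \<alpha> k then Ej {} (n - r) (\<alpha>(k := \<alpha> k - r)) else 0))"
        using KL[of k "{}" \<alpha> n] fa by simp
      also have "\<dots> = (\<Sum>r\<le>n. sf_smul ((-1)^r) (sf_mul (psum_bar r) (esym (n-r)))) \<alpha> S"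
        unfolding sum_at S by (intro sum.cong refl) (simp add: mul_bar_at fa esym_empty cong: if_cong)
      finally show ?thesis .
    next
      case False
      then show ?thesis unfolding S bar_of_at[OF even_esym] sum_at by (simp add: sf_mul_infin)
    qed
  next
    case False
    then show ?thesis unfolding sum_at
      by (simp add: bar_of_zero[OF even_esym] mul_bar_zero[OF even_esym])
  qed
qed

lemma EU: "under_of esym n = (\<Sum>r\<le>n. sf_smul ((-1)^r) (sf_mul (psum_under r) (esym (n-r))))"
proof (intro ext)
  fix \<alpha> S
  show "under_of esym n \<alpha> S = (\<Sum>r\<le>n. sf_smul ((-1)^r) (sf_mul (psum_under r) (esym (n-r)))) \<alpha> S"
  proof (cases "\<exists>k. S = {2*k+1}")
    case True
    then obtain k where S: "S = {2*k+1}" by blast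
    show ?thesis
    proof (cases "finite (xsupp \<alpha>)")
      case fa: True
      have "under_of esym n \<alpha> S = Ej {k} n \<alpha>"
        unfolding S under_of_at[OF even_esym] using fa dx_Ej[of k "{}" \<alpha> n]
        by (simp add: dx_at esym_empty)
      also have "\<dots> = (\<Sum>r\<le>n. (-1)^r * (if r \<le> \<alpha> k then Ej {} (n - r) (\<alpha>(k := \<alpha> k - r)) else 0))"
        using KL[of k "{}" \<alpha> n] fa by simp
      also have "\<dots> = (\<Sum>r\<le>n. sf_smul ((-1)^r) (sf_mul (psum_under r) (esym (n-r)))) \<alpha> S"
        unfolding sum_at S by (intro sum.cong refl) (simp add: mul_under_at_Suc fa esym_empty cong: if_cong)
      finally show ?thesis .
    next
      case False
      then show ?thesis unfolding S under_of_at[OF even_esym] sum_at by (simp add: sf_mul_infin)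
    qed
  next
    case False
    then show ?thesis unfolding sum_at
      by (simp add: under_of_zero[OF even_esym] mul_under_zero[OF even_esym])
  qed
qed

lemma HB: "bar_of hsym n = (\<Sum>r\<le>n. sf_mul (psum_bar r) (hsym (n-r)))"
proof (intro ext)
  fix \<alpha> S
  show "bar_of hsym n \<alpha> S = (\<Sum>r\<le>n. sf_mul (psum_bar r) (hsym (n-r))) \<alpha> S"
  proof (cases "\<exists>k. S = {2*k}")
    case True
    then obtain k where S: "S = {2*k}" by blast
    show ?thesis
    proof (cases "finite (xsupp \<alpha>)")
      case fa: True
      have "bar_of hsym n \<alpha> S = of_nat (\<alpha> k + 1) * Hh n \<alpha>"
        unfolding S bar_of_at[OF even_hsym] using fa dx_Hh[OF fa, of n k]
        by (simp add: dx_at hsym_empty)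
      also have "\<dots> = (\<Sum>r\<le>n. (if r \<le> \<alpha> k then Hh (n - r) (\<alpha>(k := \<alpha> k - r)) else 0))"
        using HL[OF fa] by simp
      also have "\<dots> = (\<Sum>r\<le>n. sf_mul (psum_bar r) (hsym (n-r))) \<alpha> S"
        unfolding sum_at S by (intro sum.cong refl) (simp add: mul_bar_at fa hsym_empty cong: if_cong)
      finally show ?thesis .
    next
      case False
      then show ?thesis unfolding S bar_of_at[OF even_hsym] sum_at by (simp add: sf_mul_infin)
    qed
  next
    case False
    then show ?thesis unfolding sum_at
      by (simp add: bar_of_zero[OF even_hsym] mul_bar_zero[OF even_hsym])
  qed
qed

lemma HU: "under_of hsym n = (\<Sum>r\<le>n. sf_mul (psum_under r) (hsym (n-r)))"
proof (intro ext)
  fix \<alpha> S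
  show "under_of hsym n \<alpha> S = (\<Sum>r\<le>n. sf_mul (psum_under r) (hsym (n-r))) \<alpha> S"
  proof (cases "\<exists>k. S = {2*k+1}")
    case True
    then obtain k where S: "S = {2*k+1}" by blast
    show ?thesis
    proof (cases "finite (xsupp \<alpha>)")
      case fa: True
      have "under_of hsym n \<alpha> S = of_nat (\<alpha> k + 1) * Hh n \<alpha>"
        unfolding S under_of_at[OF even_hsym] using fa dx_Hh[OF fa, of n k]
        by (simp add: dx_at hsym_empty)
      also have "\<dots> = (\<Sum>r\<le>n. (if r \<le> \<alpha> k then Hh (n - r) (\<alpha>(k := \<alpha> k - r)) else 0))"
        using HL[OF fa] by simp
      also have "\<dots> = (\<Sum>r\<le>n. sf_mul (psum_under r) (hsym (n-r))) \<alpha> S"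
        unfolding sum_at S by (intro sum.cong refl) (simp add: mul_under_at_Suc fa hsym_empty cong: if_cong)
      finally show ?thesis .
    next
      case False
      then show ?thesis unfolding S under_of_at[OF even_hsym] sum_at by (simp add: sf_mul_infin)
    qed
  next
    case False
    then show ?thesis unfolding sum_at
      by (simp add: under_of_zero[OF even_hsym] mul_under_zero[OF even_hsym])
  qed
qed


lemma sum_triangle:
  fixes G :: "nat \<Rightarrow> nat \<Rightarrow> 'a::comm_monoid_add"
  shows "(\<Sum>m\<le>n. \<Sum>a\<le>m. G a (m - a)) = (\<Sum>a\<le>n. \<Sum>b\<le>n - a. G a b)"
proof -
  have "(\<Sum>m\<le>n. \<Sum>a\<le>m. G a (m - a)) = (\<Sum>(m,a)\<in>Sigma {..n} (\<lambda>m. {..m}). G a (m - a))"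
    by (rule sum.Sigma) auto
  also have "\<dots> = (\<Sum>(a,b)\<in>Sigma {..n} (\<lambda>a. {..n - a}). G a b)"
    by (rule sum.reindex_bij_witness[where i="\<lambda>(a,b). (a+b, a)" and j="\<lambda>(m,a). (a, m - a)"]) auto
  also have "\<dots> = (\<Sum>a\<le>n. \<Sum>b\<le>n - a. G a b)"
    by (rule sum.Sigma[symmetric]) auto
  finally show ?thesis .
qed

lemma bu_term:
  assumes fa: "finite (xsupp \<alpha>)"
  shows "sf_mul (psum_bar a) (sf_mul (psum_under b) g) \<alpha> {2*i, 2*j+1} =
    (if a \<le> \<alpha> i \<and> b \<le> (\<alpha>(i := \<alpha> i - a)) j then sj i j * g ((\<alpha>(i := \<alpha> i - a))(j := (\<alpha>(i := \<alpha> i - a)) j - b)) {} else 0)"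
  unfolding mul_bar_at2 mul_under_at using fa by simp

lemma dx2_at: "dx i (dx j f) \<alpha> S = of_nat (\<alpha> i + 1) * (of_nat ((\<alpha>(i := \<alpha> i + 1)) j + 1) *
      f ((\<alpha>(i := \<alpha> i + 1))(j := (\<alpha>(i := \<alpha> i + 1)) j + 1)) S)"
  by (simp add: dx_def)

lemma gauss2: "(\<Sum>m\<le>k. 2 * (of_nat m + 1) :: rat) = of_nat ((k+1)*(k+2))"
  by (induction k) (simp_all add: algebra_simps)

lemma EBU: "barunder_of esym n = (\<Sum>m\<le>n. sf_smul ((-1)^m)
    ((\<Sum>a\<le>m. sf_mul (psum_bar a) (sf_mul (psum_under (m-a)) (esym (n-m))))
     - sf_smul (of_nat (m+1)) (sf_mul (psum_barunder m) (esym (n-m)))))"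
proof (intro ext)
  fix \<alpha> S
  let ?R = "(\<Sum>m\<le>n. sf_smul ((-1)^m)
    ((\<Sum>a\<le>m. sf_mul (psum_bar a) (sf_mul (psum_under (m-a)) (esym (n-m))))
     - sf_smul (of_nat (m+1)) (sf_mul (psum_barunder m) (esym (n-m)))))"
  have Rat: "?R \<alpha> S = (\<Sum>m\<le>n. (-1)^m * ((\<Sum>a\<le>m. sf_mul (psum_bar a) (sf_mul (psum_under (m-a)) (esym (n-m))) \<alpha> S)
     - of_nat (m+1) * sf_mul (psum_barunder m) (esym (n-m)) \<alpha> S))"
    by (simp add: sum_at)
  show "barunder_of esym n \<alpha> S = ?R \<alpha> S"
  proof (cases "\<exists>i j. S = {2*i, 2*j+1}")
    case False
    then show ?thesis unfolding Rat
      by (simp add: barunder_of_zero[OF even_esym] mul_bar_under_zero[OF even_esym] mul_barunder_zero[OF even_esym])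
  next
    case True
    then obtain i j where S: "S = {2*i, 2*j+1}" by blast
    show ?thesis
    proof (cases "finite (xsupp \<alpha>)")
      case False
      have "barunder_of esym n \<alpha> S = 0" unfolding S barunder_of_at[OF even_esym] using False by simp
      then show ?thesis unfolding Rat using False by (simp add: sf_mul_infin)
    next
      case fa: True
      show ?thesis
      proof (cases "i = j")
        case True
        have L: "barunder_of esym n \<alpha> S = 0"
        proof -
          let ?b = "(\<alpha>(i := \<alpha> i + 1))(i := (\<alpha>(i := \<alpha> i + 1)) i + 1)"
          have "\<not> (\<forall>l. ?b l \<le> 1)"
          proof
            assume "\<forall>l. ?b l \<le> 1"
            then have "?b i \<le> 1" by blast
            then show False by simp
          qed
          then have E0: "Ej {} (n+2) ?b = 0" unfolding Ej_def by auto
          show ?thesis unfolding S barunder_of_at[OF even_esym] dx2_at esym_empty True[symmetric]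
            using E0 by simp
        qed
        have T: "(\<Sum>a\<le>m. sf_mul (psum_bar a) (sf_mul (psum_under (m-a)) (esym (n-m))) \<alpha> S)
            = of_nat (m+1) * sf_mul (psum_barunder m) (esym (n-m)) \<alpha> S" for m
        proof -
          have "(\<Sum>a\<le>m. sf_mul (psum_bar a) (sf_mul (psum_under (m-a)) (esym (n-m))) \<alpha> S)
              = (\<Sum>a\<le>m. sf_mul (psum_barunder m) (esym (n-m)) \<alpha> S)"
          proof (rule sum.cong[OF refl])
            fix a assume a: "a \<in> {..m}"
            have e: "(a \<le> \<alpha> j \<and> m - a \<le> \<alpha> j - a) \<longleftrightarrow> m \<le> \<alpha> j" using a by auto
            have e2: "m \<le> \<alpha> j \<Longrightarrow> \<alpha> j - a - (m - a) = \<alpha> j - m" using a by auto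
            have e3: "a + (m - a) = m" using a by auto
            show "sf_mul (psum_bar a) (sf_mul (psum_under (m-a)) (esym (n-m))) \<alpha> S = sf_mul (psum_barunder m) (esym (n-m)) \<alpha> S"
              unfolding S bu_term[OF fa] mul_barunder_at True using fa e e2 e3 by auto
          qed
          then show ?thesis by simp
        qed
        show ?thesis unfolding Rat L using T by simp
      next
        case False
        have L: "barunder_of esym n \<alpha> S = sj i j * Ej {i, j} n \<alpha>"
        proof -
          let ?a' = "\<alpha>(i := \<alpha> i + 1)"
          have 1: "of_nat (?a' j + 1) * Ej {} ((n+1)+1) (?a'(j := ?a' j + 1)) = Ej {j} (n+1) ?a'"
            using dx_Ej[of j "{}" ?a' "n+1"] fa by simp
          have 2: "of_nat (\<alpha> i + 1) * Ej {j} (n+1) ?a' = Ej {i, j} n \<alpha>"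
            using dx_Ej[of i "{j}" \<alpha> n] fa False by simp
          have "barunder_of esym n \<alpha> S = sj i j * (of_nat (\<alpha> i + 1) * (of_nat (?a' j + 1) * Ej {} ((n+1)+1) (?a'(j := ?a' j + 1))))"
            unfolding S barunder_of_at[OF even_esym] dx2_at esym_empty using fa
            by (simp add: numeral_2_eq_2)
          then show ?thesis using 1 2 by simp
        qed
        let ?X = "\<lambda>a b. (-1)^(a+b) * (if a \<le> \<alpha> i \<and> b \<le> (\<alpha>(i := \<alpha> i - a)) j then sj i j * Ej {} (n - a - b) ((\<alpha>(i := \<alpha> i - a))(j := (\<alpha>(i := \<alpha> i - a)) j - b)) else 0)"
        have R1: "?R \<alpha> S = (\<Sum>m\<le>n. \<Sum>a\<le>m. ?X a (m - a))"
          unfolding Rat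
        proof (rule sum.cong[OF refl])
          fix m assume m: "m \<in> {..n}"
          have z: "sf_mul (psum_barunder m) (esym (n-m)) \<alpha> S = 0"
            unfolding S mul_barunder_at using False by simp
          have "(-1)^m * (\<Sum>a\<le>m. sf_mul (psum_bar a) (sf_mul (psum_under (m-a)) (esym (n-m))) \<alpha> S)
              = (\<Sum>a\<le>m. ?X a (m - a))"
            unfolding sum_distrib_left
          proof (rule sum.cong[OF refl])
            fix a assume a: "a \<in> {..m}"
            have "n - a - (m - a) = n - m" using a by auto
            moreover have "a + (m - a) = m" using a by auto
            ultimately show "(-1)^m * sf_mul (psum_bar a) (sf_mul (psum_under (m-a)) (esym (n-m))) \<alpha> S = ?X a (m - a)"
              unfolding S bu_term[OF fa] esym_empty by simp
          qed
          then show "(-1)^m * ((\<Sum>a\<le>m. sf_mul (psum_bar a) (sf_mul (psum_under (m-a)) (esym (n-m))) \<alpha> S)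
             - of_nat (m+1) * sf_mul (psum_barunder m) (esym (n-m)) \<alpha> S) = (\<Sum>a\<le>m. ?X a (m - a))"
            using z by simp
        qed
        also have "\<dots> = (\<Sum>a\<le>n. \<Sum>b\<le>n - a. ?X a b)" by (rule sum_triangle)
        also have "\<dots> = (\<Sum>a\<le>n. sj i j * ((-1)^a * (if a \<le> \<alpha> i then Ej {j} (n - a) (\<alpha>(i := \<alpha> i - a)) else 0)))"
        proof (rule sum.cong[OF refl])
          fix a assume a: "a \<in> {..n}"
          let ?a' = "\<alpha>(i := \<alpha> i - a)"
          have fa': "finite (xsupp ?a')" using fa by simp
          have K: "(\<Sum>b\<le>n - a. (-1)^b * (if b \<le> ?a' j then Ej {} (n - a - b) (?a'(j := ?a' j - b)) else 0)) = Ej {j} (n - a) ?a'"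
            using KL[of j "{}" ?a' "n - a"] fa' by simp
          show "(\<Sum>b\<le>n - a. ?X a b) = sj i j * ((-1)^a * (if a \<le> \<alpha> i then Ej {j} (n - a) ?a' else 0))"
          proof (cases "a \<le> \<alpha> i")
            case True
            have "(\<Sum>b\<le>n - a. ?X a b) = (\<Sum>b\<le>n - a. sj i j * ((-1)^a * ((-1)^b * (if b \<le> ?a' j then Ej {} (n - a - b) (?a'(j := ?a' j - b)) else 0))))"
              using True by (intro sum.cong refl) (simp add: power_add)
            also have "\<dots> = sj i j * ((-1)^a * Ej {j} (n - a) ?a')"
              by (simp only: sum_distrib_left[symmetric] K)
            finally show ?thesis using True by simp
          qed simp
        qed
        also have "\<dots> = sj i j * Ej (insert i {j}) n \<alpha>"
          using KL[of i "{j}" \<alpha> n] fa False by (simp add: sum_distrib_left[symmetric])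
        finally show ?thesis using L by simp
      qed
    qed
  qed
qed

lemma HBU: "barunder_of hsym n = (\<Sum>m\<le>n.
    (\<Sum>a\<le>m. sf_mul (psum_bar a) (sf_mul (psum_under (m-a)) (hsym (n-m))))
     + sf_smul (of_nat (m+1)) (sf_mul (psum_barunder m) (hsym (n-m))))"
proof (intro ext)
  fix \<alpha> S
  let ?R = "(\<Sum>m\<le>n.
    (\<Sum>a\<le>m. sf_mul (psum_bar a) (sf_mul (psum_under (m-a)) (hsym (n-m))))
     + sf_smul (of_nat (m+1)) (sf_mul (psum_barunder m) (hsym (n-m))))"
  have Rat: "?R \<alpha> S = (\<Sum>m\<le>n. (\<Sum>a\<le>m. sf_mul (psum_bar a) (sf_mul (psum_under (m-a)) (hsym (n-m))) \<alpha> S)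
     + of_nat (m+1) * sf_mul (psum_barunder m) (hsym (n-m)) \<alpha> S)"
    by (simp add: sum_at)
  show "barunder_of hsym n \<alpha> S = ?R \<alpha> S"
  proof (cases "\<exists>i j. S = {2*i, 2*j+1}")
    case False
    then show ?thesis unfolding Rat
      by (simp add: barunder_of_zero[OF even_hsym] mul_bar_under_zero[OF even_hsym] mul_barunder_zero[OF even_hsym])
  next
    case True
    then obtain i j where S: "S = {2*i, 2*j+1}" by blast
    show ?thesis
    proof (cases "finite (xsupp \<alpha>)")
      case False
      have "barunder_of hsym n \<alpha> S = 0" unfolding S barunder_of_at[OF even_hsym] using False by simp
      then show ?thesis unfolding Rat using False by (simp add: sf_mul_infin)
    next
      case fa: True
      let ?a' = "\<alpha>(i := \<alpha> i + 1)"
      have fa': "finite (xsupp ?a')" using fa by simp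
      have H2: "Hh ((n+1)+1) (?a'(j := ?a' j + 1)) = Hh n \<alpha>"
        using dx_Hh[OF fa', of "n+1" j] dx_Hh[OF fa, of n i] by simp
      have L0: "barunder_of hsym n \<alpha> S = sj i j * (of_nat (\<alpha> i + 1) * (of_nat (?a' j + 1) * Hh ((n+1)+1) (?a'(j := ?a' j + 1))))"
        unfolding S barunder_of_at[OF even_hsym] dx2_at hsym_empty using fa
        by (simp add: numeral_2_eq_2)
      show ?thesis
      proof (cases "i = j")
        case True
        have L: "barunder_of hsym n \<alpha> S = of_nat ((\<alpha> j + 1) * (\<alpha> j + 2)) * Hh n \<alpha>"
          using L0 H2 True by (simp add: algebra_simps)
        have T2: "sf_mul (psum_barunder m) (hsym (n-m)) \<alpha> S = (if m \<le> \<alpha> j then Hh n \<alpha> else 0)" if m: "m \<le> n" for m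
          unfolding S mul_barunder_at hsym_empty using fa True Hh_upd[OF fa _ m, of j] by simp
        have T: "(\<Sum>a\<le>m. sf_mul (psum_bar a) (sf_mul (psum_under (m-a)) (hsym (n-m))) \<alpha> S)
            = of_nat (m+1) * sf_mul (psum_barunder m) (hsym (n-m)) \<alpha> S" for m
        proof -
          have "(\<Sum>a\<le>m. sf_mul (psum_bar a) (sf_mul (psum_under (m-a)) (hsym (n-m))) \<alpha> S)
              = (\<Sum>a\<le>m. sf_mul (psum_barunder m) (hsym (n-m)) \<alpha> S)"
          proof (rule sum.cong[OF refl])
            fix a assume a: "a \<in> {..m}"
            have e: "(a \<le> \<alpha> j \<and> m - a \<le> \<alpha> j - a) \<longleftrightarrow> m \<le> \<alpha> j" using a by auto
            have e2: "m \<le> \<alpha> j \<Longrightarrow> \<alpha> j - a - (m - a) = \<alpha> j - m" using a by auto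
            have e3: "a + (m - a) = m" using a by auto
            show "sf_mul (psum_bar a) (sf_mul (psum_under (m-a)) (hsym (n-m))) \<alpha> S = sf_mul (psum_barunder m) (hsym (n-m)) \<alpha> S"
              unfolding S bu_term[OF fa] mul_barunder_at True using fa e e2 e3 by auto
          qed
          then show ?thesis by simp
        qed
        have "?R \<alpha> S = (\<Sum>m\<le>n. 2 * (of_nat m + 1) * (if m \<le> \<alpha> j then Hh n \<alpha> else 0))"
          unfolding Rat by (intro sum.cong refl) (simp add: T T2 algebra_simps)
        also have "\<dots> = of_nat ((\<alpha> j + 1) * (\<alpha> j + 2)) * Hh n \<alpha>"
        proof (cases "Hh n \<alpha> = 0")
          case True then show ?thesis by (simp cong: if_cong)
        next
          case False
          then have xd: "xdeg \<alpha> = n" by (simp add: Hh_def split: if_splits)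
          have aj: "\<alpha> j \<le> n" using le_xdeg[OF fa, of j] xd by simp
          have "(\<Sum>m\<le>n. 2 * (of_nat m + 1) * (if m \<le> \<alpha> j then Hh n \<alpha> else 0))
              = (\<Sum>m\<in>{..n} \<inter> {m. m \<le> \<alpha> j}. 2 * (of_nat m + 1) * Hh n \<alpha>)"
            by (simp add: sum.If_cases if_distrib cong: if_cong)
          also have "{..n} \<inter> {m. m \<le> \<alpha> j} = {..\<alpha> j}" using aj by auto
          also have "(\<Sum>m\<le>\<alpha> j. 2 * (of_nat m + 1) * Hh n \<alpha>) = (\<Sum>m\<le>\<alpha> j. 2 * (of_nat m + 1)) * Hh n \<alpha>"
            by (simp add: sum_distrib_right)
          finally show ?thesis using gauss2[of "\<alpha> j"] by simp
        qed
        finally show ?thesis using L by simp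
      next
        case False
        have L: "barunder_of hsym n \<alpha> S = sj i j * (of_nat (\<alpha> i + 1) * (of_nat (\<alpha> j + 1) * Hh n \<alpha>))"
          using L0 H2 False by simp
        let ?X = "\<lambda>a b. (if a \<le> \<alpha> i \<and> b \<le> (\<alpha>(i := \<alpha> i - a)) j then sj i j * Hh (n - a - b) ((\<alpha>(i := \<alpha> i - a))(j := (\<alpha>(i := \<alpha> i - a)) j - b)) else 0)"
        have R1: "?R \<alpha> S = (\<Sum>m\<le>n. \<Sum>a\<le>m. ?X a (m - a))"
          unfolding Rat
        proof (rule sum.cong[OF refl])
          fix m assume m: "m \<in> {..n}"
          have z: "sf_mul (psum_barunder m) (hsym (n-m)) \<alpha> S = 0"
            unfolding S mul_barunder_at using False by simp
          have "(\<Sum>a\<le>m. sf_mul (psum_bar a) (sf_mul (psum_under (m-a)) (hsym (n-m))) \<alpha> S)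
              = (\<Sum>a\<le>m. ?X a (m - a))"
          proof (rule sum.cong[OF refl])
            fix a assume a: "a \<in> {..m}"
            have "n - a - (m - a) = n - m" using a by auto
            then show "sf_mul (psum_bar a) (sf_mul (psum_under (m-a)) (hsym (n-m))) \<alpha> S = ?X a (m - a)"
              unfolding S bu_term[OF fa] hsym_empty by simp
          qed
          then show "(\<Sum>a\<le>m. sf_mul (psum_bar a) (sf_mul (psum_under (m-a)) (hsym (n-m))) \<alpha> S)
             + of_nat (m+1) * sf_mul (psum_barunder m) (hsym (n-m)) \<alpha> S = (\<Sum>a\<le>m. ?X a (m - a))"
            using z by simp
        qed
        also have "\<dots> = (\<Sum>a\<le>n. \<Sum>b\<le>n - a. ?X a b)" by (rule sum_triangle)
        also have "\<dots> = (\<Sum>a\<le>n. sj i j * (of_nat (\<alpha> j + 1) * (if a \<le> \<alpha> i then Hh (n - a) (\<alpha>(i := \<alpha> i - a)) else 0)))"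
        proof (rule sum.cong[OF refl])
          fix a assume a: "a \<in> {..n}"
          let ?b' = "\<alpha>(i := \<alpha> i - a)"
          have fb: "finite (xsupp ?b')" using fa by simp
          have K: "(\<Sum>b\<le>n - a. (if b \<le> ?b' j then Hh (n - a - b) (?b'(j := ?b' j - b)) else 0)) = of_nat (?b' j + 1) * Hh (n - a) ?b'"
            using HL[OF fb, where m="n - a" and i=j] by simp
          have bj: "?b' j = \<alpha> j" using False by simp
          show "(\<Sum>b\<le>n - a. ?X a b) = sj i j * (of_nat (\<alpha> j + 1) * (if a \<le> \<alpha> i then Hh (n - a) ?b' else 0))"
          proof (cases "a \<le> \<alpha> i")
            case True
            have "(\<Sum>b\<le>n - a. ?X a b) = (\<Sum>b\<le>n - a. sj i j * (if b \<le> ?b' j then Hh (n - a - b) (?b'(j := ?b' j - b)) else 0))"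
              using True by (intro sum.cong refl) simp
            also have "\<dots> = sj i j * (of_nat (?b' j + 1) * Hh (n - a) ?b')"
              by (simp only: sum_distrib_left[symmetric] K)
            finally show ?thesis using True bj by simp
          qed simp
        qed
        also have "\<dots> = sj i j * (of_nat (\<alpha> j + 1) * (of_nat (\<alpha> i + 1) * Hh n \<alpha>))"
          using HL[OF fa, where m=n and i=i] by (simp add: sum_distrib_left[symmetric])
        finally show ?thesis using L by (simp add: algebra_simps)
      qed
    qed
  qed
qed


declare smul_at[simp del]

lemma smul_mul_l: "sf_mul (sf_smul c f) g = sf_smul c (sf_mul f g)"
  by (simp add: sf_mul_def sf_smul_def sum_distrib_left fun_eq_iff ac_simps)
lemma smul_mul_r: "sf_mul f (sf_smul c g) = sf_smul c (sf_mul f g)"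
  by (simp add: sf_mul_def sf_smul_def sum_distrib_left fun_eq_iff ac_simps)
lemma smul_smul: "sf_smul a (sf_smul b f) = sf_smul (a * b) f"
  by (simp add: sf_smul_def fun_eq_iff)
lemma smul_one[simp]: "sf_smul 1 f = f"
  by (simp add: sf_smul_def fun_eq_iff)
lemma smul_sum: "sf_smul c (sum F A) = (\<Sum>x\<in>A. sf_smul c (F x))"
  by (induction A rule: infinite_finite_induct) (auto simp: sf_smul_def fun_eq_iff algebra_simps)
lemma smul_minus: "sf_smul c (f - g) = sf_smul c f - sf_smul c g"
  by (simp add: sf_smul_def fun_eq_iff algebra_simps)
lemma mul_sum_l: "sf_mul (sum F A) g = (\<Sum>x\<in>A. sf_mul (F x) g)"
proof (induction A rule: infinite_finite_induct)
  case (infinite A) then show ?case by (simp add: sf_mul_def fun_eq_iff)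
next
  case empty then show ?case by (simp add: sf_mul_def fun_eq_iff)
next
  case (insert x F) then show ?case
    by (simp add: sf_mul_def fun_eq_iff sum.distrib algebra_simps)
qed

lemma PSinf_wf: "f \<in> PSinf \<Longrightarrow> well_formed f" by (simp add: PSinf_def)

lemma esym0: "esym 0 = sf_one"
proof (intro ext)
  fix \<alpha> S
  have "finite (xsupp \<alpha>) \<and> card (xsupp \<alpha>) = 0 \<longleftrightarrow> \<alpha> = (\<lambda>_. 0)"
    by (auto simp: xsupp_def fun_eq_iff)
  then show "esym 0 \<alpha> S = sf_one \<alpha> S" by (auto simp: esym_def sf_one_def)
qed

lemma hsym0: "hsym 0 = sf_one"
proof (intro ext)
  fix \<alpha> S
  have "finite (xsupp \<alpha>) \<and> xdeg \<alpha> = 0 \<longleftrightarrow> \<alpha> = (\<lambda>_. 0)"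
  proof
    assume a: "finite (xsupp \<alpha>) \<and> xdeg \<alpha> = 0"
    then have "\<alpha> i = 0" for i using le_xdeg[of \<alpha> i] by simp
    then show "\<alpha> = (\<lambda>_. 0)" by auto
  qed (simp add: xdeg_def)
  then show "hsym 0 \<alpha> S = sf_one \<alpha> S" by (auto simp: hsym_def sf_one_def)
qed

lemma esym_PSinf: "esym n \<in> PSinf"
proof (induction n rule: less_induct)
  case (less n)
  show ?case
  proof (cases "n = 0")
    case True then show ?thesis by (simp add: esym0 PSinf_one)
  next
    case False
    then have n: "n \<ge> 1" by simp
    have "(\<Sum>r\<in>{1..n}. sf_smul ((-1)^(r-1)) (sf_mul (psum r) (esym (n-r)))) \<in> PSinf"
      using less False by (intro PSinf_sum PSinf_smul PSinf_mul psum_PSinf) auto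
    then have "sf_smul (of_nat n) (esym n) \<in> PSinf" using N0[OF n] by simp
    then have "sf_smul (1 / of_nat n) (sf_smul (of_nat n) (esym n)) \<in> PSinf" by (rule PSinf_smul)
    then show ?thesis using False by (simp add: smul_smul)
  qed
qed

lemma peel:
  fixes F G :: "nat \<Rightarrow> 'a::ab_group_add"
  assumes "finite A" "n \<notin> A" "sum F (insert n A) = sum G (insert n A)" "\<And>r. r \<in> A \<Longrightarrow> F r = G r"
  shows "F n = G n"
proof -
  have "sum F A = sum G A" using assms(4) by (rule sum.cong[OF refl])
  then show ?thesis using assms(1-3) by simp
qed

lemma sign_sq[simp]: "(-1::rat)^r * (-1)^r = 1"
  by (simp add: power_add[symmetric])
lemma sign_sq2[simp]: "(-1::rat)^r * ((-1)^r * x) = x"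
  by (simp add: mult.assoc[symmetric])

locale main = endo +
  assumes e: "\<And>n. \<omega> (esym n) = hsym n"
    and eb: "\<And>n. \<omega> (bar_of esym n) = bar_of hsym n"
    and eu: "\<And>n. \<omega> (under_of esym n) = under_of hsym n"
    and ebu: "\<And>n. \<omega> (barunder_of esym n) = barunder_of hsym n"
begin

lemma om_p: "n \<ge> 1 \<Longrightarrow> \<omega> (psum n) = sf_smul ((-1)^(n-1)) (psum n)"
proof (induction n rule: less_induct)
  case (less n)
  then have n: "n \<ge> 1" by simp
  let ?F = "\<lambda>r. sf_smul ((-1)^(r-1)) (sf_mul (\<omega> (psum r)) (hsym (n-r)))"
  let ?G = "\<lambda>r. sf_mul (psum r) (hsym (n-r))"
  have "\<omega> (sf_smul (of_nat n) (esym n)) = sf_smul (of_nat n) (hsym n)"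
    using om_smul[OF esym_PSinf] e by simp
  moreover have "\<omega> (sf_smul (of_nat n) (esym n)) = sum ?F {1..n}"
    unfolding N0[OF n]
    by (subst om_sum) (auto intro!: PSinf_smul PSinf_mul psum_PSinf esym_PSinf sum.cong
        simp: om_smul om_mul e PSinf_mul PSinf_smul psum_PSinf esym_PSinf)
  ultimately have E: "sum ?F {1..n} = sum ?G {1..n}" using H0[OF n] by simp
  have ins: "{1..n} = insert n {1..n-1}" using n by auto
  have IHeq: "?F r = ?G r" if r: "r \<in> {1..n-1}" for r
  proof -
    have "\<omega> (psum r) = sf_smul ((-1)^(r-1)) (psum r)" using less.IH[of r] r by auto
    then show "?F r = ?G r" by (simp add: smul_mul_l smul_smul)
  qed
  have "?F n = ?G n"
    by (rule peel[where F="?F" and G="?G" and A="{1..n-1}"]) (use E ins IHeq in auto)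
  then have "sf_smul ((-1)^(n-1)) (\<omega> (psum n)) = psum n"
    using sf_mul_one_right[OF PSinf_wf[OF om_in[OF psum_PSinf]]] sf_mul_one_right[OF PSinf_wf[OF psum_PSinf]]
    by (simp add: hsym0)
  then have "sf_smul ((-1)^(n-1)) (sf_smul ((-1)^(n-1)) (\<omega> (psum n))) = sf_smul ((-1)^(n-1)) (psum n)" by simp
  then show ?case by (simp add: smul_smul)
qed

lemma om_pb: "\<omega> (psum_bar n) = sf_smul ((-1)^n) (psum_bar n)"
proof (induction n rule: less_induct)
  case (less n)
  let ?F = "\<lambda>r. sf_smul ((-1)^r) (sf_mul (\<omega> (psum_bar r)) (hsym (n-r)))"
  let ?G = "\<lambda>r. sf_mul (psum_bar r) (hsym (n-r))"
  have "\<omega> (bar_of esym n) = sum ?F {..n}"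
    unfolding EB
    by (subst om_sum) (auto intro!: PSinf_smul PSinf_mul psum_bar_PSinf esym_PSinf sum.cong
        simp: om_smul om_mul e PSinf_mul PSinf_smul psum_bar_PSinf esym_PSinf)
  then have E: "sum ?F {..n} = sum ?G {..n}" using HB eb by simp
  have ins: "{..n} = insert n {..<n}" by auto
  have IHeq: "?F r = ?G r" if r: "r \<in> {..<n}" for r
  proof -
    have "\<omega> (psum_bar r) = sf_smul ((-1)^r) (psum_bar r)" using less.IH[of r] r by auto
    then show "?F r = ?G r" by (simp add: smul_mul_l smul_smul)
  qed
  have "?F n = ?G n"
    by (rule peel[where F="?F" and G="?G" and A="{..<n}"]) (use E ins IHeq in auto)
  then have "sf_smul ((-1)^n) (\<omega> (psum_bar n)) = psum_bar n"
    using sf_mul_one_right[OF PSinf_wf[OF om_in[OF psum_bar_PSinf]]] sf_mul_one_right[OF PSinf_wf[OF psum_bar_PSinf]]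
    by (simp add: hsym0)
  then have "sf_smul ((-1)^n) (sf_smul ((-1)^n) (\<omega> (psum_bar n))) = sf_smul ((-1)^n) (psum_bar n)" by simp
  then show ?case by (simp add: smul_smul)
qed

lemma om_pu: "\<omega> (psum_under n) = sf_smul ((-1)^n) (psum_under n)"
proof (induction n rule: less_induct)
  case (less n)
  let ?F = "\<lambda>r. sf_smul ((-1)^r) (sf_mul (\<omega> (psum_under r)) (hsym (n-r)))"
  let ?G = "\<lambda>r. sf_mul (psum_under r) (hsym (n-r))"
  have "\<omega> (under_of esym n) = sum ?F {..n}"
    unfolding EU
    by (subst om_sum) (auto intro!: PSinf_smul PSinf_mul psum_under_PSinf esym_PSinf sum.cong
        simp: om_smul om_mul e PSinf_mul PSinf_smul psum_under_PSinf esym_PSinf)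
  then have E: "sum ?F {..n} = sum ?G {..n}" using HU eu by simp
  have ins: "{..n} = insert n {..<n}" by auto
  have IHeq: "?F r = ?G r" if r: "r \<in> {..<n}" for r
  proof -
    have "\<omega> (psum_under r) = sf_smul ((-1)^r) (psum_under r)" using less.IH[of r] r by auto
    then show "?F r = ?G r" by (simp add: smul_mul_l smul_smul)
  qed
  have "?F n = ?G n"
    by (rule peel[where F="?F" and G="?G" and A="{..<n}"]) (use E ins IHeq in auto)
  then have "sf_smul ((-1)^n) (\<omega> (psum_under n)) = psum_under n"
    using sf_mul_one_right[OF PSinf_wf[OF om_in[OF psum_under_PSinf]]] sf_mul_one_right[OF PSinf_wf[OF psum_under_PSinf]]
    by (simp add: hsym0)
  then have "sf_smul ((-1)^n) (sf_smul ((-1)^n) (\<omega> (psum_under n))) = sf_smul ((-1)^n) (psum_under n)" by simp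
  then show ?case by (simp add: smul_smul)
qed

lemma om_Q:
  "\<omega> (\<Sum>a\<le>m. sf_mul (psum_bar a) (sf_mul (psum_under (m-a)) (esym k)))
   = sf_smul ((-1)^m) (\<Sum>a\<le>m. sf_mul (psum_bar a) (sf_mul (psum_under (m-a)) (hsym k)))"
proof -
  have "\<omega> (\<Sum>a\<le>m. sf_mul (psum_bar a) (sf_mul (psum_under (m-a)) (esym k)))
      = (\<Sum>a\<le>m. sf_mul (\<omega> (psum_bar a)) (sf_mul (\<omega> (psum_under (m-a))) (hsym k)))"
    by (subst om_sum) (auto intro!: PSinf_mul psum_bar_PSinf psum_under_PSinf esym_PSinf sum.cong
        simp: om_mul e PSinf_mul psum_bar_PSinf psum_under_PSinf esym_PSinf)
  also have "\<dots> = (\<Sum>a\<le>m. sf_smul ((-1)^m) (sf_mul (psum_bar a) (sf_mul (psum_under (m-a)) (hsym k))))"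
  proof (rule sum.cong[OF refl])
    fix a assume a: "a \<in> {..m}"
    then have "(-1::rat)^a * (-1)^(m-a) = (-1)^m" "(-1::rat)^(m-a) * (-1)^a = (-1)^m" by (simp_all add: power_add[symmetric])
    then show "sf_mul (\<omega> (psum_bar a)) (sf_mul (\<omega> (psum_under (m-a))) (hsym k)) = sf_smul ((-1)^m) (sf_mul (psum_bar a) (sf_mul (psum_under (m-a)) (hsym k)))"
      by (simp add: om_pb om_pu smul_mul_l smul_mul_r smul_smul)
  qed
  also have "\<dots> = sf_smul ((-1)^m) (\<Sum>a\<le>m. sf_mul (psum_bar a) (sf_mul (psum_under (m-a)) (hsym k)))"
    by (simp add: smul_sum)
  finally show ?thesis .
qed

lemma Q_PSinf: "(\<Sum>a\<le>m. sf_mul (psum_bar a) (sf_mul (psum_under (m-a)) (esym k))) \<in> PSinf"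
  by (intro PSinf_sum PSinf_mul psum_bar_PSinf psum_under_PSinf esym_PSinf)

lemma om_pbu: "\<omega> (psum_barunder n) = sf_smul (- ((-1)^n)) (psum_barunder n)"
proof (induction n rule: less_induct)
  case (less n)
  let ?Qh = "\<lambda>m. (\<Sum>a\<le>m. sf_mul (psum_bar a) (sf_mul (psum_under (m-a)) (hsym (n-m))))"
  let ?F = "\<lambda>m. sf_smul ((-1)^m) (sf_smul ((-1)^m) (?Qh m) - sf_smul (of_nat (m+1)) (sf_mul (\<omega> (psum_barunder m)) (hsym (n-m))))"
  let ?G = "\<lambda>m. ?Qh m + sf_smul (of_nat (m+1)) (sf_mul (psum_barunder m) (hsym (n-m)))"
  have "\<omega> (barunder_of esym n) = sum ?F {..n}"
    unfolding EBU
  proof (subst om_sum)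
    show "\<And>m. m \<in> {..n} \<Longrightarrow> sf_smul ((-1)^m) ((\<Sum>a\<le>m. sf_mul (psum_bar a) (sf_mul (psum_under (m-a)) (esym (n-m))))
     - sf_smul (of_nat (m+1)) (sf_mul (psum_barunder m) (esym (n-m)))) \<in> PSinf"
      by (intro PSinf_smul PSinf_minus Q_PSinf PSinf_mul psum_barunder_PSinf esym_PSinf)
    show "(\<Sum>m\<le>n. \<omega> (sf_smul ((-1)^m) ((\<Sum>a\<le>m. sf_mul (psum_bar a) (sf_mul (psum_under (m-a)) (esym (n-m))))
     - sf_smul (of_nat (m+1)) (sf_mul (psum_barunder m) (esym (n-m)))))) = sum ?F {..n}"
    proof (rule sum.cong[OF refl])
      fix m assume "m \<in> {..n}"
      have W: "sf_mul (psum_barunder m) (esym (n-m)) \<in> PSinf" by (intro PSinf_mul psum_barunder_PSinf esym_PSinf)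
      show "\<omega> (sf_smul ((-1)^m) ((\<Sum>a\<le>m. sf_mul (psum_bar a) (sf_mul (psum_under (m-a)) (esym (n-m))))
     - sf_smul (of_nat (m+1)) (sf_mul (psum_barunder m) (esym (n-m))))) = ?F m"
        by (simp add: om_smul om_minus PSinf_minus PSinf_smul Q_PSinf W om_Q om_mul psum_barunder_PSinf esym_PSinf e)
    qed
  qed
  then have E: "sum ?F {..n} = sum ?G {..n}" using HBU ebu by simp
  have ins: "{..n} = insert n {..<n}" by auto
  have IHeq: "?F r = ?G r" if r: "r \<in> {..<n}" for r
  proof -
    have "\<omega> (psum_barunder r) = sf_smul (- ((-1)^r)) (psum_barunder r)" using less.IH[of r] r by auto
    note IH = this
    show "?F r = ?G r" unfolding IH smul_mul_l by (simp add: fun_eq_iff smul_at algebra_simps)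
  qed
  have "?F n = ?G n"
    by (rule peel[where F="?F" and G="?G" and A="{..<n}"]) (use E ins IHeq in auto)
  then have X: "?F n = ?G n" .
  have Y: "\<omega> (psum_barunder n) \<alpha> S = - ((-1)^n) * psum_barunder n \<alpha> S" for \<alpha> S
  proof -
    have "?F n \<alpha> S = ?G n \<alpha> S" using X by simp
    then have "(-1)^n * ((-1)^n * ?Qh n \<alpha> S - of_nat (n+1) * \<omega> (psum_barunder n) \<alpha> S)
        = ?Qh n \<alpha> S + of_nat (n+1) * psum_barunder n \<alpha> S"
      using sf_mul_one_right[OF PSinf_wf[OF om_in[OF psum_barunder_PSinf]]] sf_mul_one_right[OF PSinf_wf[OF psum_barunder_PSinf]]
      by (simp add: hsym0 smul_at)
    then have "- ((-1)^n * of_nat (n+1) * \<omega> (psum_barunder n) \<alpha> S) = of_nat (n+1) * psum_barunder n \<alpha> S"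
      by (simp add: algebra_simps)
    then have "(-1)^n * (- ((-1)^n * of_nat (n+1) * \<omega> (psum_barunder n) \<alpha> S)) = (-1)^n * (of_nat (n+1) * psum_barunder n \<alpha> S)"
      by simp
    then have "of_nat (n+1) * \<omega> (psum_barunder n) \<alpha> S = of_nat (n+1) * (- ((-1)^n) * psum_barunder n \<alpha> S)"
      by (simp add: algebra_simps)
    moreover have nz: "(of_nat (n+1) :: rat) \<noteq> 0" by simp
    ultimately show ?thesis by (metis mult_left_cancel)
  qed
  show ?case using Y by (simp add: fun_eq_iff smul_at)
qed

end


lemma powi_nm1: "n \<ge> 1 \<Longrightarrow> (-1::rat) powi (int n - 1) = (-1)^(n-1)"
proof -
  assume "n \<ge> 1"
  then have "int n - 1 = int (n - 1)" by simp
  then show ?thesis by (simp only: power_int_of_nat)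
qed

lemma powi_m1: "(-1::rat) powi (int n - 1) = - ((-1)^n)"
proof -
  have "(-1::rat) powi (int n - 1) = (-1) powi (int n) / (-1) powi 1"
    by (rule power_int_diff) simp
  also have "\<dots> = (-1)^n / (-1)" by (simp only: power_int_of_nat power_int_1_right)
  also have "\<dots> = - ((-1)^n)" by simp
  finally show ?thesis .
qed

lemma ptilde_PSinf: "ptilde a \<in> PSinf"
  by (cases a; rename_tac m n; case_tac m) (auto simp: psum_PSinf psum_bar_PSinf psum_under_PSinf psum_barunder_PSinf)

lemma p_sp_PSinf: "p_sp L \<in> PSinf"
  by (induction L) (auto simp: p_sp_def PSinf_one PSinf_mul ptilde_PSinf)

definition wt :: "mark \<times> nat \<Rightarrow> int" where
  "wt a = int (snd a) - (if fst a = Bi then 1 else 0) - (if fst a = Unm \<and> snd a \<noteq> 0 then 1 else 0)"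

lemma exp_sum: "int (sp_size L) - int (len_bi L) - int (len_0 L) = sum_list (map wt L)"
  by (induction L) (auto simp: sp_size_def len_bi_def len_0_def wt_def)

context main
begin

lemma om_ptilde:
  assumes "a \<noteq> (Unm, 0)"
  shows "\<omega> (ptilde a) = sf_smul ((-1) powi wt a) (ptilde a)"
proof (cases a)
  case (Pair m n)
  show ?thesis
  proof (cases m)
    case Bi then show ?thesis using Pair by (simp add: wt_def om_pbu powi_m1)
  next
    case Over then show ?thesis using Pair by (simp add: wt_def om_pb)
  next
    case Under then show ?thesis using Pair by (simp add: wt_def om_pu)
  next
    case Unm
    then have n: "n \<ge> 1" using Pair assms by simp
    then show ?thesis using Pair Unm by (simp add: wt_def om_p powi_nm1)
  qed
qed

lemma om_p_sp: "(Unm, 0) \<notin> set L \<Longrightarrow> \<omega> (p_sp L) = sf_smul ((-1) powi sum_list (map wt L)) (p_sp L)"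
proof (induction L)
  case Nil then show ?case by (simp add: p_sp_def om_one)
next
  case (Cons a L)
  have pa: "p_sp (a # L) = sf_mul (ptilde a) (p_sp L)" by (simp add: p_sp_def)
  have "a \<noteq> (Unm, 0)" using Cons.prems by auto
  then have "\<omega> (p_sp (a # L)) = sf_mul (sf_smul ((-1) powi wt a) (ptilde a)) (sf_smul ((-1) powi sum_list (map wt L)) (p_sp L))"
    using Cons by (simp add: pa om_mul ptilde_PSinf p_sp_PSinf om_ptilde)
  also have "\<dots> = sf_smul ((-1) powi (wt a + sum_list (map wt L))) (p_sp (a # L))"
    by (simp add: smul_mul_l smul_mul_r smul_smul pa power_int_add mult.commute)
  finally show ?case by simp
qed

end

theorem mainTheorem5:
  fixes \<omega> :: "sf \<Rightarrow> sf"
  assumes endo: "is_alg_endo \<omega> PSinf"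
    and e: "\<And>n. \<omega> (esym n) = hsym n"
    and eb: "\<And>n. \<omega> (bar_of esym n) = bar_of hsym n"
    and eu: "\<And>n. \<omega> (under_of esym n) = under_of hsym n"
    and ebu: "\<And>n. \<omega> (barunder_of esym n) = barunder_of hsym n"
  shows "(\<forall>n\<ge>1. \<omega> (psum n) = sf_smul ((-1) powi (int n - 1)) (psum n))
       \<and> (\<forall>n. \<omega> (psum_bar n) = sf_smul ((-1) ^ n) (psum_bar n))
       \<and> (\<forall>n. \<omega> (psum_under n) = sf_smul ((-1) ^ n) (psum_under n))
       \<and> (\<forall>n. \<omega> (psum_barunder n) = sf_smul ((-1) powi (int n - 1)) (psum_barunder n))
       \<and> (\<forall>L. is_superpartition L \<longrightarrow> \<omega> (p_sp L) = sf_smul (omega_sign L) (p_sp L))"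
proof -
  interpret main \<omega>
  proof
    show "is_alg_endo \<omega> PSinf" by (rule endo)
  qed (rule e eb eu ebu)+
  show ?thesis
  proof (intro conjI allI impI)
    fix n :: nat assume "n \<ge> 1" then show "\<omega> (psum n) = sf_smul ((-1) powi (int n - 1)) (psum n)"
      by (simp add: om_p powi_nm1)
  next
    fix n show "\<omega> (psum_bar n) = sf_smul ((-1) ^ n) (psum_bar n)" by (rule om_pb)
  next
    fix n show "\<omega> (psum_under n) = sf_smul ((-1) ^ n) (psum_under n)" by (rule om_pu)
  next
    fix n show "\<omega> (psum_barunder n) = sf_smul ((-1) powi (int n - 1)) (psum_barunder n)"
      by (simp add: om_pbu powi_m1)
  next
    fix L assume "is_superpartition L"
    then have "(Unm, 0) \<notin> set L" by (simp add: is_superpartition_def)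
    then have "\<omega> (p_sp L) = sf_smul ((-1) powi sum_list (map wt L)) (p_sp L)" by (rule om_p_sp)
    moreover have "omega_sign L = (-1) powi sum_list (map wt L)" unfolding omega_sign_def exp_sum ..
    ultimately show "\<omega> (p_sp L) = sf_smul (omega_sign L) (p_sp L)" by simp
  qed
qed


end
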